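(* Let $\varepsilon>0$, let $n,m\ge 1$ and $\alpha\in(0,1)$. Consider a dataset of $n$ users in which user $i$ contributes $m$ samples $(s_{i,j},a^0_{i,j},a^1_{i,j},y_{i,j})$, $j\in[m]$, with known differential features $x_{i,j}=\phi(s_{i,j},a^1_{i,j})-\phi(s_{i,j},a^0_{i,j})\in\mathbb{R}^d$ and labels $y_{i,j}\in\{0,1\}$ drawn independently with $\mathbb{P}[y_{i,j}=1\mid x_{i,j}]=\sigma(x_{i,j}^\top\theta^* )$, where $\sigma(z)=1/(1+e^{-z})$. Suppose (Boundedness) $\theta^*\in\Theta_B=\{\theta\in\mathbb{R}^d:\langle \mathbf{1},\theta\rangle=0,\ \|\theta\|\le B\}$ and $\|\phi(s,a)\|\le L$ for all $(s,a)$. Apply user-level randomized response: independently for each $(i,j)$, $\tilde y_{i,j}=y_{i,j}$ with probability $\sigma(\varepsilon/m)=\frac{e^{\varepsilon/m}}{1+e^{\varepsilon/m}}$ and $\tilde y_{i,j}=1-y_{i,j}$ otherwise. Define $$\widehat l_{\mathcal D,\varepsilon}(\theta)=-\sum_{i=1}^n\sum_{j=1}^m\Big[\mathbb{1}(\tilde y_{i,j}=1)\log \widehat p^{\,1}_{i,j}+\mathbb{1}(\tilde y_{i,j}=0)\log\widehat p^{\,0}_{i,j}\Big],$$ $$\widehat p^{\,1}_{i,j}=\frac{\sigma(x_{i,j}^\top\theta)^{\sigma(\varepsilon/m)}}{(1-\sigma(x_{i,j}^\top\theta))^{1-\sigma(\varepsilon/m)}},\qquad \widehat p^{\,0}_{i,j}=\frac{(1-\sigma(x_{i,j}^\top\theta))^{\sigma(\varepsilon/m)}}{\sigma(x_{i,j}^\top\theta)^{1-\sigma(\varepsilon/m)}},$$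 and let $\widehat\theta_{\mathrm{RR}}\in\operatorname{argmin}_{\theta\in\Theta_B}\widehat l_{\mathcal D,\varepsilon}(\theta)$. Then $\widehat\theta_{\mathrm{RR}}$ is $\varepsilon$ user-level label differentially private, and with probability at least $1-\alpha$, $$\|\widehat\theta_{\mathrm{RR}}-\theta^*\|_2\le O\!\left(\frac{1}{\gamma\sqrt{\lambda_{\min}(\Sigma_{\mathcal D})}}\cdot\frac{e^{\varepsilon/m}+1}{e^{\varepsilon/m}-1}\sqrt{\frac{d+\log(1/\alpha)}{nm}}\right),$$ where $\gamma=\frac{1}{2+e^{-2LB}+e^{2LB}}$, $\Sigma_{\mathcal D}=\frac{1}{nm}\sum_{i=1}^n\sum_{j=1}^m x_{i,j}x_{i,j}^\top$, $\lambda_{\min}$ denotes the minimum eigenvalue, and $O(\cdot)$ hides a universal constant.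
   Context: A mechanism $\mathcal M$ on datasets of $n$ users each contributing $m$ samples is $(\varepsilon,\delta)$ user-level label differentially private if for any two datasets that differ only in the labels $y$ of the samples of a single user, and any event $O$, $\Pr[\mathcal M(\mathcal D)\in O]\le e^{\varepsilon}\Pr[\mathcal M(\mathcal D')\in O]+\delta$; the states and actions $(s,a^0,a^1)$ are considered public. $\varepsilon$ user-level label DP means $\delta=0$. $\phi:\mathcal S\times\mathcal A\to\mathbb{R}^d$ is a known fixed feature map (linear reward $r_\theta(s,a)=\phi(s,a)^\top\theta$, Bradley–Terry–Luce preference model). *)

theory Defs
  imports "HOL-Probability.Probability"
begin

definition sigmoid :: "real \<Rightarrow> real" where
  "sigmoid z = 1 / (1 + exp (- z))"

text \<open>Vectors of R^d are represented as functions nat => real vanishing at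
  indices >= d (so that the dimension d is an ordinary natural number and the
  universal constant can be quantified before d).\<close>
definition vecs :: "nat \<Rightarrow> (nat \<Rightarrow> real) set" where
  "vecs d = {v. \<forall>k\<ge>d. v k = 0}"

definition vinner :: "nat \<Rightarrow> (nat \<Rightarrow> real) \<Rightarrow> (nat \<Rightarrow> real) \<Rightarrow> real" where
  "vinner d u v = (\<Sum>k<d. u k * v k)"

definition vnorm :: "nat \<Rightarrow> (nat \<Rightarrow> real) \<Rightarrow> real" where
  "vnorm d v = sqrt (\<Sum>k<d. (v k)\<^sup>2)"

definition Theta_B :: "nat \<Rightarrow> real \<Rightarrow> (nat \<Rightarrow> real) set" where
  "Theta_B d B = {\<theta> \<in> vecs d. (\<Sum>k<d. \<theta> k) = 0 \<and> vnorm d \<theta> \<le> B}"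

definition feat ::
  "('s \<Rightarrow> 'a \<Rightarrow> (nat \<Rightarrow> real)) \<Rightarrow> (nat \<Rightarrow> nat \<Rightarrow> 's) \<Rightarrow> (nat \<Rightarrow> nat \<Rightarrow> 'a)
     \<Rightarrow> (nat \<Rightarrow> nat \<Rightarrow> 'a) \<Rightarrow> nat \<Rightarrow> nat \<Rightarrow> (nat \<Rightarrow> real)" where
  "feat \<phi> s a0 a1 i j = (\<lambda>k. \<phi> (s i j) (a1 i j) k - \<phi> (s i j) (a0 i j) k)"

text \<open>Index set of samples: user i < n, sample j < m. Labels are
  functions (nat * nat) => bool, True meaning label 1.\<close>
definition sample_idx :: "nat \<Rightarrow> nat \<Rightarrow> (nat \<times> nat) set" where
  "sample_idx n m = {..<n} \<times> {..<m}"

definition btl_labels ::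
  "nat \<Rightarrow> nat \<Rightarrow> nat \<Rightarrow> (nat \<Rightarrow> nat \<Rightarrow> (nat \<Rightarrow> real)) \<Rightarrow> (nat \<Rightarrow> real)
     \<Rightarrow> ((nat \<times> nat) \<Rightarrow> bool) pmf" where
  "btl_labels d n m x \<theta> =
     Pi_pmf (sample_idx n m) False
       (\<lambda>(i, j). bernoulli_pmf (sigmoid (vinner d (x i j) \<theta>)))"

definition rr_pmf ::
  "real \<Rightarrow> nat \<Rightarrow> nat \<Rightarrow> ((nat \<times> nat) \<Rightarrow> bool) \<Rightarrow> ((nat \<times> nat) \<Rightarrow> bool) pmf" where
  "rr_pmf \<epsilon> n m y =
     Pi_pmf (sample_idx n m) False
       (\<lambda>ij. map_pmf (\<lambda>keep. if keep then y ij else \<not> y ij)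
                 (bernoulli_pmf (sigmoid (\<epsilon> / real m))))"

definition rr_p1 :: "real \<Rightarrow> real \<Rightarrow> real" where
  "rr_p1 q z = sigmoid z powr q / (1 - sigmoid z) powr (1 - q)"

definition rr_p0 :: "real \<Rightarrow> real \<Rightarrow> real" where
  "rr_p0 q z = (1 - sigmoid z) powr q / sigmoid z powr (1 - q)"

definition rr_loss ::
  "nat \<Rightarrow> nat \<Rightarrow> nat \<Rightarrow> real \<Rightarrow> (nat \<Rightarrow> nat \<Rightarrow> (nat \<Rightarrow> real))
     \<Rightarrow> ((nat \<times> nat) \<Rightarrow> bool) \<Rightarrow> (nat \<Rightarrow> real) \<Rightarrow> real" where
  "rr_loss d n m \<epsilon> x yt \<theta> =
     - (\<Sum>i<n. \<Sum>j<m.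
          (if yt (i, j) then ln (rr_p1 (sigmoid (\<epsilon> / real m)) (vinner d (x i j) \<theta>))
           else ln (rr_p0 (sigmoid (\<epsilon> / real m)) (vinner d (x i j) \<theta>))))"

definition gram ::
  "nat \<Rightarrow> nat \<Rightarrow> (nat \<Rightarrow> nat \<Rightarrow> (nat \<Rightarrow> real)) \<Rightarrow> nat \<Rightarrow> nat \<Rightarrow> real" where
  "gram n m x k l = (1 / (real n * real m)) * (\<Sum>i<n. \<Sum>j<m. x i j k * x i j l)"

definition lambda_min :: "nat \<Rightarrow> (nat \<Rightarrow> nat \<Rightarrow> real) \<Rightarrow> real" where
  "lambda_min d M =
     Min {\<mu>. \<exists>v\<in>vecs d. v \<noteq> (\<lambda>_. 0) \<and> (\<forall>k<d. (\<Sum>l<d. M k l * v l) = \<mu> * v k)}"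

definition gamma_LB :: "real \<Rightarrow> real \<Rightarrow> real" where
  "gamma_LB L B = 1 / (2 + exp (- 2 * L * B) + exp (2 * L * B))"

definition user_label_dp ::
  "real \<Rightarrow> nat \<Rightarrow> nat \<Rightarrow> (((nat \<times> nat) \<Rightarrow> bool) \<Rightarrow> 'b pmf) \<Rightarrow> bool" where
  "user_label_dp \<epsilon> n m M \<longleftrightarrow>
     (\<forall>k<n. \<forall>y y'. (\<forall>i<n. \<forall>j<m. i \<noteq> k \<longrightarrow> y (i, j) = y' (i, j)) \<longrightarrow>
        (\<forall>E. measure_pmf.prob (M y) E \<le> exp \<epsilon> * measure_pmf.prob (M y') E))"

end

theory Submission
  imports Defs
begin


lemma cont_coord[continuous_intros]: "continuous_on S (\<lambda>x::nat\<Rightarrow>real. x i)"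
  by (rule continuous_on_subset[OF continuous_on_product_coordinates]) simp

lemma cont_vinner[continuous_intros]: "continuous_on S (\<lambda>v::nat\<Rightarrow>real. vinner d v v)"
  unfolding vinner_def by (intro continuous_intros)

lemma sphere_compact: "compact {v::nat\<Rightarrow>real. v \<in> vecs d \<and> vinner d v v = 1}"
proof -
  have cK: "compact (PiE UNIV (\<lambda>k::nat. if k < d then {-1..1::real} else {0}))"
  proof -
    have "compactin (product_topology (\<lambda>i. euclidean) UNIV) (PiE UNIV (\<lambda>k::nat. if k < d then {-1..1::real} else {0}))"
      by (subst compactin_PiE) auto
    then show ?thesis by (simp add: euclidean_product_topology)
  qed
  have cl: "closed {v::nat\<Rightarrow>real. vinner d v v = 1}"
    by (intro closed_Collect_eq continuous_intros)
  have eq: "{v::nat\<Rightarrow>real. v \<in> vecs d \<and> vinner d v v = 1} =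
     PiE UNIV (\<lambda>k::nat. if k < d then {-1..1::real} else {0}) \<inter> {v. vinner d v v = 1}"
  proof (intro equalityI subsetI)
    fix v assume v: "v \<in> {v::nat\<Rightarrow>real. v \<in> vecs d \<and> vinner d v v = 1}"
    have "\<bar>v k\<bar> \<le> 1" if "k < d" for k
    proof -
      have "(v k)^2 \<le> (\<Sum>j<d. v j * v j)"
        using that member_le_sum[of k "{..<d}" "\<lambda>j. v j * v j"] by (simp add: power2_eq_square)
      then have "(v k)^2 \<le> 1" using v by (simp add: vinner_def power2_eq_square)
      then show ?thesis by (simp add: abs_square_le_1)
    qed
    then show "v \<in> PiE UNIV (\<lambda>k::nat. if k < d then {-1..1::real} else {0}) \<inter> {v. vinner d v v = 1}"
      using v by (auto simp: vecs_def PiE_iff abs_le_iff)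
  next
    fix v assume a: "v \<in> PiE UNIV (\<lambda>k::nat. if k < d then {-1..1::real} else {0}) \<inter> {v. vinner d v v = 1}"
    have "v k = 0" if "k \<ge> d" for k
    proof -
      have "v k \<in> (if k < d then {-1..1::real} else {0})" using a by (auto simp: PiE_iff)
      then show ?thesis using that by simp
    qed
    then show "v \<in> {v::nat\<Rightarrow>real. v \<in> vecs d \<and> vinner d v v = 1}" using a by (simp add: vecs_def)
  qed
  show ?thesis unfolding eq by (intro compact_Int_closed cK cl)
qed

definition qf :: "nat \<Rightarrow> (nat \<Rightarrow> nat \<Rightarrow> real) \<Rightarrow> (nat \<Rightarrow> real) \<Rightarrow> real" where
  "qf d M v = (\<Sum>k<d. \<Sum>l<d. M k l * v k * v l)"

lemma cont_qf[continuous_intros]: "continuous_on S (\<lambda>v::nat\<Rightarrow>real. qf d M v)"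
  unfolding qf_def by (intro continuous_intros)

lemma vinner_comm: "vinner d u v = vinner d v u"
  by (simp add: vinner_def mult.commute)

lemma vinner_scale: "vinner d (\<lambda>k. c * u k) v = c * vinner d u v"
  by (simp add: vinner_def sum_distrib_left mult.assoc)

lemma vinner_scale2: "vinner d u (\<lambda>k. c * v k) = c * vinner d u v"
  by (simp add: vinner_def sum_distrib_left algebra_simps)

lemma vinner_add: "vinner d (\<lambda>k. u k + v k) w = vinner d u w + vinner d v w"
  by (simp add: vinner_def sum.distrib algebra_simps)

lemma vinner_diff: "vinner d (\<lambda>k. u k - v k) w = vinner d u w - vinner d v w"
  by (simp add: vinner_def sum_subtractf algebra_simps)

lemma vinner_diff2: "vinner d w (\<lambda>k. u k - v k) = vinner d w u - vinner d w v"
  by (simp add: vinner_def sum_subtractf algebra_simps)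

lemma vinner_sum_left: "vinner d (\<lambda>k. \<Sum>\<mu>\<in>F. c \<mu> * e \<mu> k) u = (\<Sum>\<mu>\<in>F. c \<mu> * vinner d (e \<mu>) u)"
  unfolding vinner_def by (simp add: sum_distrib_left sum_distrib_right mult.assoc) (rule sum.swap)

lemma vinner_nonneg: "vinner d v v \<ge> 0"
  by (simp add: vinner_def sum_nonneg)

lemma vinner_zero_iff: "vinner d v v = 0 \<longleftrightarrow> (\<forall>k<d. v k = 0)"
  unfolding vinner_def by (subst sum_nonneg_eq_0_iff) auto

lemma qf_scale: "qf d M (\<lambda>k. c * v k) = c^2 * qf d M v"
  by (simp add: qf_def sum_distrib_left power2_eq_square algebra_simps)

lemma qf_zero: "(\<forall>k<d. v k = 0) \<Longrightarrow> qf d M v = 0"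
  by (simp add: qf_def)

lemma qf_add:
  assumes sym: "\<And>k l. k < d \<Longrightarrow> l < d \<Longrightarrow> M k l = M l k"
  shows "qf d M (\<lambda>k. a k + t * b k) = qf d M a + 2 * t * (\<Sum>k<d. b k * (\<Sum>l<d. M k l * a l)) + t^2 * qf d M b"
proof -
  have e1: "(\<Sum>k<d. \<Sum>l<d. M k l * a k * b l) = (\<Sum>k<d. b k * (\<Sum>l<d. M k l * a l))"
  proof -
    have "(\<Sum>k<d. \<Sum>l<d. M k l * a k * b l) = (\<Sum>l<d. \<Sum>k<d. M k l * a k * b l)"
      by (rule sum.swap)
    also have "\<dots> = (\<Sum>l<d. b l * (\<Sum>k<d. M l k * a k))"
      by (auto intro!: sum.cong simp: sum_distrib_left sym algebra_simps)
    finally show ?thesis .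
  qed
  have "qf d M (\<lambda>k. a k + t * b k) = (\<Sum>k<d. \<Sum>l<d. M k l * a k * a l)
      + t * (\<Sum>k<d. \<Sum>l<d. M k l * a k * b l) + t * (\<Sum>k<d. \<Sum>l<d. M k l * b k * a l)
      + t^2 * (\<Sum>k<d. \<Sum>l<d. M k l * b k * b l)"
    by (simp add: qf_def sum.distrib sum_distrib_left power2_eq_square algebra_simps)
  also have "(\<Sum>k<d. \<Sum>l<d. M k l * b k * a l) = (\<Sum>k<d. b k * (\<Sum>l<d. M k l * a l))"
    by (simp add: sum_distrib_left algebra_simps)
  finally show ?thesis using e1 by (simp add: qf_def)
qed

lemma vinner_add_scaled: "vinner d (\<lambda>k. a k + t * b k) (\<lambda>k. a k + t * b k) = vinner d a a + 2 * t * vinner d b a + t^2 * vinner d b b"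
  by (simp add: vinner_def sum.distrib sum_distrib_left power2_eq_square algebra_simps)

lemma rayleigh_min_exists:
  assumes "d > 0"
  shows "\<exists>v0\<in>vecs d. vinner d v0 v0 = 1 \<and> (\<forall>v\<in>vecs d. qf d M v0 * vinner d v v \<le> qf d M v)"
proof -
  let ?S = "{v::nat\<Rightarrow>real. v \<in> vecs d \<and> vinner d v v = 1}"
  have ne: "?S \<noteq> {}"
  proof -
    have "(\<lambda>k. if k = 0 then 1 else 0::real) \<in> ?S"
    proof -
      have "(\<Sum>k<d. (if k = 0 then 1 else 0) * (if k = 0 then 1 else 0::real)) = (\<Sum>k<d. if k = 0 then 1 else 0)"
        by (rule sum.cong) auto
      also have "\<dots> = 1" using assms by (simp add: sum.delta)
      finally show ?thesis using assms by (simp add: vecs_def vinner_def)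
    qed
    then show ?thesis by blast
  qed
  obtain v0 where v0: "v0 \<in> ?S" and min: "\<And>y. y \<in> ?S \<Longrightarrow> qf d M v0 \<le> qf d M y"
    using continuous_attains_inf[OF sphere_compact ne, of "qf d M"] by (auto intro: continuous_intros)
  have "qf d M v0 * vinner d v v \<le> qf d M v" if v: "v \<in> vecs d" for v
  proof (cases "vinner d v v = 0")
    case True
    then show ?thesis using vinner_zero_iff[of d v] by (simp add: qf_zero)
  next
    case False
    define s where "s = sqrt (vinner d v v)"
    have sp: "s > 0" using False vinner_nonneg[of d v] by (simp add: s_def)
    have s2: "s^2 = vinner d v v" using vinner_nonneg[of d v] by (simp add: s_def)
    define u where "u = (\<lambda>k. (1/s) * v k)"
    have "vinner d u u = (1/s) * ((1/s) * vinner d v v)"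
      unfolding u_def by (simp only: vinner_scale vinner_scale2)
    then have "vinner d u u = 1" using sp s2 False by (simp add: power2_eq_square)
    then have "u \<in> ?S"
      using v by (auto simp: u_def vecs_def)
    then have "qf d M v0 \<le> qf d M u" by (rule min)
    also have "qf d M u = qf d M v / s^2" unfolding u_def by (simp only: qf_scale) (simp add: power_divide)
    finally have "qf d M v0 \<le> qf d M v / s^2" .
    moreover have "s^2 > 0" using sp by simp
    ultimately have "qf d M v0 * s^2 \<le> qf d M v" by (simp add: pos_le_divide_eq)
    then show ?thesis using s2 by simp
  qed
  then show ?thesis using v0 by blast
qed

lemma min_is_eigen:
  assumes sym: "\<And>k l. k < d \<Longrightarrow> l < d \<Longrightarrow> M k l = M l k"
    and v0: "v0 \<in> vecs d" and min: "\<forall>v\<in>vecs d. qf d M v0 * vinner d v v \<le> qf d M v"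
    and n1: "vinner d v0 v0 = 1"
  shows "\<forall>k<d. (\<Sum>l<d. M k l * v0 l) = qf d M v0 * v0 k"
proof -
  define \<mu> where "\<mu> = qf d M v0"
  define r where "r = (\<lambda>k. if k < d then (\<Sum>l<d. M k l * v0 l) - \<mu> * v0 k else 0)"
  define S where "S = vinner d r r"
  define c where "c = qf d M r - \<mu> * vinner d r r"
  have rv: "r \<in> vecs d" by (simp add: r_def vecs_def)
  have key: "0 \<le> 2 * t * S + t^2 * c" for t
  proof -
    have "(\<lambda>k. v0 k + t * r k) \<in> vecs d" using v0 rv by (simp add: vecs_def)
    then have "\<mu> * vinner d (\<lambda>k. v0 k + t * r k) (\<lambda>k. v0 k + t * r k) \<le> qf d M (\<lambda>k. v0 k + t * r k)"
      using min by (simp add: \<mu>_def)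
    also have "qf d M (\<lambda>k. v0 k + t * r k) = \<mu> + 2 * t * (\<Sum>k<d. r k * (\<Sum>l<d. M k l * v0 l)) + t^2 * qf d M r"
      by (simp add: qf_add[OF sym] \<mu>_def)
    also have "vinner d (\<lambda>k. v0 k + t * r k) (\<lambda>k. v0 k + t * r k) = 1 + 2 * t * vinner d r v0 + t^2 * vinner d r r"
      by (simp add: vinner_add_scaled n1)
    finally have *: "\<mu> * (1 + 2 * t * vinner d r v0 + t^2 * vinner d r r) \<le> \<mu> + 2 * t * (\<Sum>k<d. r k * (\<Sum>l<d. M k l * v0 l)) + t^2 * qf d M r" .
    have "(\<Sum>k<d. r k * (\<Sum>l<d. M k l * v0 l)) - \<mu> * vinner d r v0 = (\<Sum>k<d. r k * ((\<Sum>l<d. M k l * v0 l) - \<mu> * v0 k))"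
      by (simp add: vinner_def sum_distrib_left sum_subtractf algebra_simps)
    also have "\<dots> = S" unfolding S_def vinner_def by (rule sum.cong) (auto simp: r_def)
    finally have "(\<Sum>k<d. r k * (\<Sum>l<d. M k l * v0 l)) = S + \<mu> * vinner d r v0" by simp
    with * show ?thesis by (simp add: c_def algebra_simps)
  qed
  have S0: "S = 0"
  proof (rule ccontr)
    assume "S \<noteq> 0"
    then have Sp: "S > 0" using vinner_nonneg[of d r] by (simp add: S_def)
    define a where "a = \<bar>c\<bar> + 1"
    have ap: "a > 0" by (simp add: a_def)
    define t where "t = - S / a"
    have "t^2 * c \<le> t^2 * \<bar>c\<bar>" by (intro mult_left_mono) auto
    also have "t^2 * \<bar>c\<bar> \<le> t^2 * a" by (intro mult_left_mono) (auto simp: a_def)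
    also have "t^2 * a = S^2 / a" using ap by (simp add: t_def power2_eq_square field_simps)
    finally have h1: "t^2 * c \<le> S^2 / a" .
    have h2: "2 * t * S = - 2 * S^2 / a" by (simp add: t_def power2_eq_square)
    have "2 * t * S + t^2 * c \<le> - 2 * S^2 / a + S^2 / a" using h1 h2 by linarith
    also have "\<dots> < 0" using ap Sp by (simp add: field_simps)
    finally show False using key[of t] by simp
  qed
  show ?thesis
  proof (intro allI impI)
    fix k assume k: "k < d"
    have "\<forall>k<d. r k = 0" using S0 vinner_zero_iff[of d r] by (simp add: S_def)
    then show "(\<Sum>l<d. M k l * v0 l) = qf d M v0 * v0 k" using k by (simp add: r_def \<mu>_def)
  qed
qed

lemma nonzero_vinner_pos:
  assumes "v \<in> vecs d" "v \<noteq> (\<lambda>_. 0)"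
  shows "vinner d v v > 0"
proof -
  have "\<not> (\<forall>k<d. v k = 0)"
  proof
    assume z: "\<forall>k<d. v k = 0"
    have "v = (\<lambda>_. 0)"
    proof (rule ext)
      fix k show "v k = 0"
      proof (cases "k < d")
        case True then show ?thesis using z by simp
      next
        case False then show ?thesis using assms(1) by (simp add: vecs_def)
      qed
    qed
    then show False using assms(2) by simp
  qed
  then have "vinner d v v \<noteq> 0" using vinner_zero_iff[of d v] by simp
  then show ?thesis using vinner_nonneg[of d v] by simp
qed

lemma eig_finite:
  assumes sym: "\<And>k l. k < d \<Longrightarrow> l < d \<Longrightarrow> M k l = M l k"
  shows "finite {\<mu>. \<exists>v\<in>vecs d. v \<noteq> (\<lambda>_. 0) \<and> (\<forall>k<d. (\<Sum>l<d. M k l * v l) = \<mu> * v k)}"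
    (is "finite ?E")
proof (rule ccontr)
  assume inf: "infinite ?E"
  have "\<forall>\<mu>\<in>?E. \<exists>e. e \<in> vecs d \<and> vinner d e e = 1 \<and> (\<forall>k<d. (\<Sum>l<d. M k l * e l) = \<mu> * e k)"
  proof
    fix \<mu> assume "\<mu> \<in> ?E"
    then obtain v where v: "v \<in> vecs d" "v \<noteq> (\<lambda>_. 0)" "\<forall>k<d. (\<Sum>l<d. M k l * v l) = \<mu> * v k" by blast
    have pos: "vinner d v v > 0" using nonzero_vinner_pos[OF v(1,2)] .
    define s where "s = 1 / sqrt (vinner d v v)"
    define e where "e = (\<lambda>k. s * v k)"
    have "vinner d e e = s * (s * vinner d v v)" unfolding e_def by (simp only: vinner_scale vinner_scale2)
    also have "\<dots> = 1" using pos by (simp add: s_def)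
    finally have e1: "vinner d e e = 1" .
    have "\<forall>k<d. (\<Sum>l<d. M k l * e l) = \<mu> * e k"
    proof (intro allI impI)
      fix k assume "k < d"
      have "(\<Sum>l<d. M k l * e l) = s * (\<Sum>l<d. M k l * v l)"
        by (simp add: e_def sum_distrib_left algebra_simps)
      also have "\<dots> = \<mu> * e k" using v(3) \<open>k < d\<close> by (simp add: e_def)
      finally show "(\<Sum>l<d. M k l * e l) = \<mu> * e k" .
    qed
    moreover have "e \<in> vecs d" using v(1) by (simp add: e_def vecs_def)
    ultimately show "\<exists>e. e \<in> vecs d \<and> vinner d e e = 1 \<and> (\<forall>k<d. (\<Sum>l<d. M k l * e l) = \<mu> * e k)"
      using e1 by blast
  qed
  then have "\<exists>ev. \<forall>\<mu>\<in>?E. ev \<mu> \<in> vecs d \<and> vinner d (ev \<mu>) (ev \<mu>) = 1 \<and> (\<forall>k<d. (\<Sum>l<d. M k l * ev \<mu> l) = \<mu> * ev \<mu> k)"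
    by (rule bchoice)
  then obtain ev where ev0: "\<forall>\<mu>\<in>?E. ev \<mu> \<in> vecs d \<and> vinner d (ev \<mu>) (ev \<mu>) = 1 \<and> (\<forall>k<d. (\<Sum>l<d. M k l * ev \<mu> l) = \<mu> * ev \<mu> k)"
    by blast
  have ev: "ev \<mu> \<in> vecs d \<and> vinner d (ev \<mu>) (ev \<mu>) = 1 \<and> (\<forall>k<d. (\<Sum>l<d. M k l * ev \<mu> l) = \<mu> * ev \<mu> k)"
    if "\<mu> \<in> ?E" for \<mu> using ev0 that by blast
  obtain F where F: "F \<subseteq> ?E" "finite F" "card F = Suc d"
    using infinite_arbitrarily_large[OF inf] by blast
  have orth: "vinner d (ev \<mu>) (ev \<nu>) = 0" if "\<mu> \<in> F" "\<nu> \<in> F" "\<mu> \<noteq> \<nu>" for \<mu> \<nu>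
  proof -
    have m: "\<forall>k<d. (\<Sum>l<d. M k l * ev \<mu> l) = \<mu> * ev \<mu> k" and n: "\<forall>k<d. (\<Sum>l<d. M k l * ev \<nu> l) = \<nu> * ev \<nu> k"
      using ev that F(1) by blast+
    have "\<mu> * vinner d (ev \<mu>) (ev \<nu>) = (\<Sum>k<d. (\<Sum>l<d. M k l * ev \<mu> l) * ev \<nu> k)"
      unfolding vinner_def sum_distrib_left by (rule sum.cong) (use m in auto)
    also have "\<dots> = (\<Sum>k<d. \<Sum>l<d. M k l * ev \<mu> l * ev \<nu> k)" by (simp add: sum_distrib_right)
    also have "\<dots> = (\<Sum>l<d. \<Sum>k<d. M k l * ev \<mu> l * ev \<nu> k)" by (rule sum.swap)
    also have "\<dots> = (\<Sum>l<d. ev \<mu> l * (\<Sum>k<d. M l k * ev \<nu> k))"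
      by (auto intro!: sum.cong simp: sum_distrib_left sym algebra_simps)
    also have "\<dots> = (\<Sum>l<d. ev \<mu> l * (\<nu> * ev \<nu> l))"
      by (rule sum.cong) (use n in auto)
    also have "\<dots> = \<nu> * vinner d (ev \<mu>) (ev \<nu>)"
      by (simp add: vinner_def sum_distrib_left algebra_simps)
    finally have "(\<mu> - \<nu>) * vinner d (ev \<mu>) (ev \<nu>) = 0" by (simp add: algebra_simps)
    then show ?thesis using that(3) by simp
  qed
  have bessel: "(\<Sum>\<mu>\<in>F. (ev \<mu> k)^2) \<le> 1" if k: "k < d" for k
  proof -
    define y where "y = (\<lambda>j. if j = k then 1 else 0::real)"
    have yk: "vinner d (ev \<mu>) y = ev \<mu> k" for \<mu>
    proof -
      have "vinner d (ev \<mu>) y = (\<Sum>j<d. if j = k then ev \<mu> j else 0)"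
        unfolding vinner_def y_def by (rule sum.cong) auto
      also have "\<dots> = ev \<mu> k" using k by (simp add: sum.delta)
      finally show ?thesis .
    qed
    have yy: "vinner d y y = 1"
    proof -
      have "vinner d y y = (\<Sum>j<d. if j = k then 1 else 0)"
        unfolding vinner_def y_def by (rule sum.cong) auto
      also have "\<dots> = 1" using k by simp
      finally show ?thesis .
    qed
    define z where "z = (\<lambda>j. \<Sum>\<mu>\<in>F. ev \<mu> k * ev \<mu> j)"
    have zy: "vinner d z y = (\<Sum>\<mu>\<in>F. (ev \<mu> k)^2)"
      unfolding z_def by (simp add: vinner_sum_left yk power2_eq_square)
    have zmu: "vinner d z (ev \<mu>) = ev \<mu> k" if "\<mu> \<in> F" for \<mu>
    proof -
      have "vinner d z (ev \<mu>) = (\<Sum>\<nu>\<in>F. ev \<nu> k * vinner d (ev \<nu>) (ev \<mu>))"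
        unfolding z_def by (simp add: vinner_sum_left)
      also have "\<dots> = (\<Sum>\<nu>\<in>F. if \<nu> = \<mu> then ev \<mu> k else 0)"
      proof (rule sum.cong)
        fix \<nu> assume "\<nu> \<in> F"
        then show "ev \<nu> k * vinner d (ev \<nu>) (ev \<mu>) = (if \<nu> = \<mu> then ev \<mu> k else 0)"
          using orth[of \<nu> \<mu>] ev[of \<mu>] F(1) that by auto
      qed simp
      also have "\<dots> = ev \<mu> k" using F(2) that by (simp add: sum.delta)
      finally show ?thesis .
    qed
    have zz: "vinner d z z = (\<Sum>\<mu>\<in>F. (ev \<mu> k)^2)"
    proof -
      have "vinner d z z = (\<Sum>\<mu>\<in>F. ev \<mu> k * vinner d (ev \<mu>) z)"
        by (subst (1) z_def) (simp add: vinner_sum_left)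
      also have "\<dots> = (\<Sum>\<mu>\<in>F. (ev \<mu> k)^2)"
        using zmu by (intro sum.cong) (auto simp: vinner_comm[of d _ z] power2_eq_square)
      finally show ?thesis .
    qed
    have "0 \<le> vinner d (\<lambda>j. y j - z j) (\<lambda>j. y j - z j)" by (rule vinner_nonneg)
    also have "\<dots> = vinner d y y - 2 * vinner d z y + vinner d z z"
      by (simp add: vinner_diff vinner_diff2 vinner_comm[of d y z])
    finally show ?thesis using yy zy zz by simp
  qed
  have "(\<Sum>k<d. \<Sum>\<mu>\<in>F. (ev \<mu> k)^2) \<le> (\<Sum>k<d. 1)"
    by (intro sum_mono bessel) simp
  also have "\<dots> = real d" by simp
  finally have A: "(\<Sum>k<d. \<Sum>\<mu>\<in>F. (ev \<mu> k)^2) \<le> real d" .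
  have "(\<Sum>k<d. \<Sum>\<mu>\<in>F. (ev \<mu> k)^2) = (\<Sum>\<mu>\<in>F. vinner d (ev \<mu>) (ev \<mu>))"
    by (subst sum.swap) (simp add: vinner_def power2_eq_square)
  also have "\<dots> = (\<Sum>\<mu>\<in>F. 1)"
  proof (rule sum.cong)
    fix \<mu> assume "\<mu> \<in> F"
    then have "\<mu> \<in> ?E" using F(1) by blast
    then show "vinner d (ev \<mu>) (ev \<mu>) = 1" using ev by blast
  qed simp
  also have "\<dots> = real (Suc d)" using F(3) by simp
  finally show False using A by simp
qed

lemma lambda_min_le:
  assumes sym: "\<And>k l. k < d \<Longrightarrow> l < d \<Longrightarrow> M k l = M l k" and v: "v \<in> vecs d"
  shows "lambda_min d M * vinner d v v \<le> qf d M v"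
proof (cases "d = 0")
  case True
  then show ?thesis by (simp add: vinner_def qf_def)
next
  case False
  then obtain v0 where v0: "v0 \<in> vecs d" "vinner d v0 v0 = 1" "\<forall>v\<in>vecs d. qf d M v0 * vinner d v v \<le> qf d M v"
    using rayleigh_min_exists[of d M] by auto
  have eig: "\<forall>k<d. (\<Sum>l<d. M k l * v0 l) = qf d M v0 * v0 k"
    using min_is_eigen[OF sym v0(1) v0(3) v0(2)] .
  have "v0 \<noteq> (\<lambda>_. 0)" using v0(2) by (auto simp: vinner_def)
  then have "qf d M v0 \<in> {\<mu>. \<exists>v\<in>vecs d. v \<noteq> (\<lambda>_. 0) \<and> (\<forall>k<d. (\<Sum>l<d. M k l * v l) = \<mu> * v k)}"
    using v0(1) eig by blast
  then have "lambda_min d M \<le> qf d M v0"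
    unfolding lambda_min_def by (intro Min_le eig_finite sym) auto
  then have "lambda_min d M * vinner d v v \<le> qf d M v0 * vinner d v v"
    by (intro mult_right_mono vinner_nonneg)
  also have "\<dots> \<le> qf d M v" using v0(3) v by blast
  finally show ?thesis .
qed


definition sp :: "real \<Rightarrow> real" where "sp z = ln (1 + exp (- z))"

definition ell :: "real \<Rightarrow> bool \<Rightarrow> real \<Rightarrow> real" where
  "ell q b z = (2 * q - 1) * sp z - (of_bool b - q) * z"

lemma onepexp_pos: "1 + exp (- z) > (0::real)" by (simp add: add_pos_pos)
lemma onepexp_ne: "1 + exp (- z) \<noteq> (0::real)" using onepexp_pos[of z] by linarith

lemma sigmoid_pos: "sigmoid z > 0" by (simp add: sigmoid_def add_pos_pos)
lemma sigmoid_lt1: "sigmoid z < 1"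
  using onepexp_pos[of z] by (simp add: sigmoid_def divide_less_eq)

lemma one_minus_sigmoid: "1 - sigmoid z = exp (- z) / (1 + exp (- z))"
  using onepexp_ne[of z] by (simp add: sigmoid_def field_simps)

lemma ln_sigmoid: "ln (sigmoid z) = - sp z"
  by (simp add: sigmoid_def sp_def ln_div add_pos_pos)

lemma ln_one_minus_sigmoid: "ln (1 - sigmoid z) = - z - sp z"
  using onepexp_pos[of z] by (simp add: one_minus_sigmoid sp_def ln_div)

lemma ln_rr_p1: "ln (rr_p1 q z) = (1 - 2 * q) * sp z + (1 - q) * z"
proof -
  have "ln (rr_p1 q z) = q * ln (sigmoid z) - (1 - q) * ln (1 - sigmoid z)"
    using sigmoid_pos[of z] sigmoid_lt1[of z]
    by (simp add: rr_p1_def ln_div ln_powr)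
  then show ?thesis by (simp add: ln_sigmoid ln_one_minus_sigmoid algebra_simps)
qed

lemma ln_rr_p0: "ln (rr_p0 q z) = (1 - 2 * q) * sp z - q * z"
proof -
  have "ln (rr_p0 q z) = q * ln (1 - sigmoid z) - (1 - q) * ln (sigmoid z)"
    using sigmoid_pos[of z] sigmoid_lt1[of z]
    by (simp add: rr_p0_def ln_div ln_powr)
  then show ?thesis by (simp add: ln_sigmoid ln_one_minus_sigmoid algebra_simps)
qed

lemma rr_loss_ell:
  "rr_loss d n m \<epsilon> x yt \<theta> = (\<Sum>i<n. \<Sum>j<m. ell (sigmoid (\<epsilon> / real m)) (yt (i, j)) (vinner d (x i j) \<theta>))"
proof -
  have "- (if b then ln (rr_p1 q z) else ln (rr_p0 q z)) = ell q b z" for q b z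
    by (cases b) (simp_all add: ln_rr_p1 ln_rr_p0 ell_def algebra_simps)
  then show ?thesis
    unfolding rr_loss_def by (simp add: sum_negf[symmetric])
qed

lemma deriv_sp: "(sp has_real_derivative (sigmoid z - 1)) (at z)"
proof -
  have "(sp has_real_derivative (1 / (1 + exp (- z)) * (- exp (- z)))) (at z)"
    unfolding sp_def by (auto intro!: derivative_eq_intros simp: add_pos_pos)
  moreover have "1 / (1 + exp (- z)) * (- exp (- z)) = sigmoid z - 1"
    using one_minus_sigmoid[of z] onepexp_ne[of z] by (simp add: algebra_simps)
  ultimately show ?thesis by simp
qed

lemma deriv_sigmoid: "(sigmoid has_real_derivative (1 / (exp z + 2 + exp (- z)))) (at z)"
proof -
  have "(sigmoid has_real_derivative (exp (- z) / (1 + exp (- z))^2)) (at z)"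
    unfolding sigmoid_def[abs_def]
    using onepexp_ne[of z] by (auto intro!: derivative_eq_intros simp: power2_eq_square field_simps)
  moreover have "exp (- z) / (1 + exp (- z))^2 = 1 / (exp z + 2 + exp (- z))"
  proof -
    have aux: "(1/e) / (1 + 1/e)^2 = 1 / (e + 2 + 1/e)" if "e > 0" for e :: real
      using that by (simp add: field_simps power2_eq_square)
    have "exp (- z) = 1 / exp z" by (simp add: exp_minus inverse_eq_divide)
    then show ?thesis using aux[of "exp z"] by simp
  qed
  ultimately show ?thesis by simp
qed

lemma cosh_le:
  assumes "\<bar>t\<bar> \<le> (R::real)"
  shows "exp t + exp (- t) \<le> exp R + exp (- R)"
proof -
  have f1: "exp R - exp t \<ge> 0" using assms by simp
  have f2: "1 - exp (- t - R) \<ge> 0" using assms by simp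
  have "(exp R - exp t) * (1 - exp (- t - R)) = exp R + exp (- R) - exp t - exp (- t)"
    by (simp add: algebra_simps exp_diff exp_minus field_simps)
  moreover have "(exp R - exp t) * (1 - exp (- t - R)) \<ge> 0" using f1 f2 by simp
  ultimately show ?thesis by simp
qed

lemma sp_strong:
  fixes a b R :: real
  assumes "\<bar>a\<bar> \<le> R" "\<bar>b\<bar> \<le> R"
  shows "(sigmoid a - 1) * (b - a) + (1 / (2 + exp (- R) + exp R)) / 2 * (b - a)^2 \<le> sp b - sp a"
proof -
  define g where "g = 1 / (2 + exp (- R) + exp R)"
  define f where "f = (\<lambda>z. sp z - g / 2 * z^2)"
  define f' where "f' = (\<lambda>z. sigmoid z - 1 - g * z)"
  define f'' where "f'' = (\<lambda>z. 1 / (exp z + 2 + exp (- z)) - g)"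
  have "f' a * (b - a) \<le> f b - f a"
  proof (rule f''_imp_f'[where C="{-R..R}" and f''=f''])
    show "convex {-R..R}" by simp
    show "DERIV f x :> f' x" if "x \<in> {-R..R}" for x
      unfolding f_def f'_def by (auto intro!: derivative_eq_intros deriv_sp)
    show "DERIV f' x :> f'' x" if "x \<in> {-R..R}" for x
      unfolding f'_def f''_def by (auto intro!: derivative_eq_intros deriv_sigmoid)
    show "0 \<le> f'' x" if "x \<in> {-R..R}" for x
    proof -
      have "\<bar>x\<bar> \<le> R" using that by auto
      then have "exp x + exp (- x) \<le> exp R + exp (- R)" by (rule cosh_le)
      then have "exp x + 2 + exp (- x) \<le> 2 + exp (- R) + exp R" by simp
      moreover have "0 < exp x + 2 + exp (- x)" by (simp add: add_pos_pos)
      ultimately have "1 / (2 + exp (- R) + exp R) \<le> 1 / (exp x + 2 + exp (- x))"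
        by (intro divide_left_mono) auto
      then show ?thesis by (simp add: f''_def g_def)
    qed
    show "a \<in> {-R..R}" "b \<in> {-R..R}" using assms by auto
  qed
  then have "(sigmoid a - 1 - g * a) * (b - a) \<le> sp b - g / 2 * b^2 - (sp a - g / 2 * a^2)"
    by (simp add: f_def f'_def)
  moreover have "(sigmoid a - 1 - g * a) * (b - a) = (sigmoid a - 1) * (b - a) + g / 2 * (b - a)^2 - (g / 2 * b^2 - g / 2 * a^2)"
    by (simp add: power2_eq_square algebra_simps)
  ultimately show ?thesis by (simp add: g_def)
qed

definition ptil :: "real \<Rightarrow> real \<Rightarrow> real" where
  "ptil q z = (2 * q - 1) * sigmoid z + 1 - q"

lemma ell_gap:
  fixes a b R q :: real
  assumes "\<bar>a\<bar> \<le> R" "\<bar>b\<bar> \<le> R" "q \<ge> 1/2"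
  shows "(ptil q a - of_bool y) * (b - a) + (2 * q - 1) * ((1 / (2 + exp (- R) + exp R)) / 2) * (b - a)^2 \<le> ell q y b - ell q y a"
proof -
  have "(2 * q - 1) * ((sigmoid a - 1) * (b - a) + (1 / (2 + exp (- R) + exp R)) / 2 * (b - a)^2) \<le> (2 * q - 1) * (sp b - sp a)"
    using sp_strong[OF assms(1,2)] assms(3) by (intro mult_left_mono) auto
  then show ?thesis by (simp add: ell_def ptil_def algebra_simps)
qed


definition ip :: "'i set \<Rightarrow> ('i \<Rightarrow> real) \<Rightarrow> ('i \<Rightarrow> real) \<Rightarrow> real" where
  "ip I u v = (\<Sum>i\<in>I. u i * v i)"

lemma ip_comm: "ip I u v = ip I v u" by (simp add: ip_def mult.commute)

lemma ip_nonneg: "ip I v v \<ge> 0" by (simp add: ip_def sum_nonneg)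

lemma ip_zero_iff: "finite I \<Longrightarrow> ip I v v = 0 \<longleftrightarrow> (\<forall>i\<in>I. v i = 0)"
  unfolding ip_def by (subst sum_nonneg_eq_0_iff) auto

lemma ip_expand:
  assumes "\<And>i. i \<in> I \<Longrightarrow> z i = (\<Sum>k<r. c k * U k i)"
  shows "ip I w z = (\<Sum>k<r. c k * ip I w (U k))"
proof -
  have "ip I w z = (\<Sum>i\<in>I. \<Sum>k<r. w i * (c k * U k i))"
    unfolding ip_def using assms by (auto intro!: sum.cong simp: sum_distrib_left)
  also have "\<dots> = (\<Sum>k<r. \<Sum>i\<in>I. w i * (c k * U k i))" by (rule sum.swap)
  also have "\<dots> = (\<Sum>k<r. c k * ip I w (U k))"
    unfolding ip_def by (auto intro!: sum.cong simp: sum_distrib_left algebra_simps)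
  finally show ?thesis .
qed

definition orthonormal :: "'i set \<Rightarrow> nat \<Rightarrow> (nat \<Rightarrow> 'i \<Rightarrow> real) \<Rightarrow> bool" where
  "orthonormal I r U \<longleftrightarrow> (\<forall>k<r. \<forall>l<r. ip I (U k) (U l) = (if k = l then 1 else 0))"

lemma ip_orth_sum:
  assumes "orthonormal I r U" "l < r"
  shows "(\<Sum>k<r. c k * ip I (U l) (U k)) = c l"
proof -
  have "(\<Sum>k<r. c k * ip I (U l) (U k)) = (\<Sum>k<r. if k = l then c l else 0)"
    using assms unfolding orthonormal_def by (intro sum.cong) auto
  also have "\<dots> = c l" using assms(2) by (simp add: sum.delta)
  finally show ?thesis .
qed

lemma gram_schmidt:
  assumes fin: "finite I"
  shows "\<exists>U r. r \<le> p \<and> orthonormal I r U \<and>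
     (\<forall>j<p. \<forall>i\<in>I. a j i = (\<Sum>k<r. ip I (U k) (a j) * U k i))"
proof (induction p)
  case 0
  show ?case by (rule exI[of _ "\<lambda>_ _. 0"], rule exI[of _ 0]) (simp add: orthonormal_def)
next
  case (Suc p)
  then obtain U r where r: "r \<le> p" and on: "orthonormal I r U"
    and sp: "\<forall>j<p. \<forall>i\<in>I. a j i = (\<Sum>k<r. ip I (U k) (a j) * U k i)" by blast
  define c where "c = (\<lambda>k. ip I (U k) (a p))"
  define res where "res = (\<lambda>i. a p i - (\<Sum>k<r. c k * U k i))"
  have res_orth: "ip I (U l) res = 0" if "l < r" for l
  proof -
    have "ip I (U l) res = ip I (U l) (a p) - ip I (U l) (\<lambda>i. \<Sum>k<r. c k * U k i)"
      by (simp add: ip_def res_def sum_subtractf algebra_simps)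
    also have "ip I (U l) (\<lambda>i. \<Sum>k<r. c k * U k i) = (\<Sum>k<r. c k * ip I (U l) (U k))"
      by (rule ip_expand) simp
    also have "\<dots> = c l" by (rule ip_orth_sum[OF on that])
    finally show ?thesis by (simp add: c_def)
  qed
  show ?case
  proof (cases "ip I res res = 0")
    case True
    then have "\<forall>i\<in>I. res i = 0" using ip_zero_iff[OF fin] by blast
    then have "\<forall>i\<in>I. a p i = (\<Sum>k<r. ip I (U k) (a p) * U k i)" by (simp add: res_def c_def)
    then have "\<forall>j<Suc p. \<forall>i\<in>I. a j i = (\<Sum>k<r. ip I (U k) (a j) * U k i)"
      using sp less_Suc_eq by auto
    then show ?thesis using r on by (intro exI[of _ U] exI[of _ r]) auto
  next
    case False
    define N where "N = ip I res res"
    have Np: "N > 0" using False ip_nonneg[of I res] by (simp add: N_def)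
    define U' where "U' = U(r := (\<lambda>i. res i / sqrt N))"
    have U'r: "U' r = (\<lambda>i. (1 / sqrt N) * res i)" by (simp add: U'_def)
    have U'k: "U' k = U k" if "k < r" for k using that by (simp add: U'_def)
    have ip_scale: "ip I (\<lambda>i. s * u i) v = s * ip I u v" for s u v
      by (simp add: ip_def sum_distrib_left algebra_simps)
    have ip_scale2: "ip I u (\<lambda>i. s * v i) = s * ip I u v" for s u v
      by (simp add: ip_def sum_distrib_left algebra_simps)
    have on': "orthonormal I (Suc r) U'"
      unfolding orthonormal_def
    proof (intro allI impI)
      fix k l assume k: "k < Suc r" and l: "l < Suc r"
      show "ip I (U' k) (U' l) = (if k = l then 1 else 0)"
      proof (cases "k = r")
        case True
        show ?thesis
        proof (cases "l = r")
          case True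
          have "ip I (U' r) (U' r) = (1 / sqrt N) * ((1 / sqrt N) * N)"
            unfolding U'r by (simp only: ip_scale ip_scale2 N_def)
          also have "\<dots> = 1" using Np by (simp add: field_simps)
          finally show ?thesis using True \<open>k = r\<close> by simp
        next
          case False
          then have "l < r" using l by simp
          have "ip I (U' k) (U' l) = ip I (U' r) (U l)" using \<open>k = r\<close> U'k[OF \<open>l < r\<close>] by simp
          also have "\<dots> = (1 / sqrt N) * ip I res (U l)" unfolding U'r by (rule ip_scale)
          also have "\<dots> = (1 / sqrt N) * ip I (U l) res" by (simp only: ip_comm[of I res "U l"])
          finally have "ip I (U' k) (U' l) = (1 / sqrt N) * ip I (U l) res" .
          then show ?thesis using res_orth[OF \<open>l < r\<close>] False \<open>k = r\<close> by simp
        qed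
      next
        case False
        then have "k < r" using k by simp
        show ?thesis
        proof (cases "l = r")
          case True
          have "ip I (U' k) (U' l) = ip I (U k) (U' r)" using True U'k[OF \<open>k < r\<close>] by simp
          also have "\<dots> = (1 / sqrt N) * ip I (U k) res" unfolding U'r by (rule ip_scale2)
          finally have "ip I (U' k) (U' l) = (1 / sqrt N) * ip I (U k) res" .
          then show ?thesis using res_orth[OF \<open>k < r\<close>] True \<open>k < r\<close> by simp
        next
          case False
          then have "l < r" using l by simp
          then show ?thesis using on \<open>k < r\<close> U'k unfolding orthonormal_def by simp
        qed
      qed
    qed
    have span': "\<forall>j<Suc p. \<forall>i\<in>I. a j i = (\<Sum>k<Suc r. ip I (U' k) (a j) * U' k i)"
    proof (intro allI impI ballI)
      fix j i assume j: "j < Suc p" and i: "i \<in> I"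
      have split: "(\<Sum>k<Suc r. ip I (U' k) (a j) * U' k i) =
          (\<Sum>k<r. ip I (U k) (a j) * U k i) + ip I (U' r) (a j) * U' r i"
        using U'k by simp
      show "a j i = (\<Sum>k<Suc r. ip I (U' k) (a j) * U' k i)"
      proof (cases "j < p")
        case True
        have "ip I res (a j) = (\<Sum>k<r. ip I (U k) (a j) * ip I res (U k))"
          by (rule ip_expand) (use sp True in auto)
        also have "\<dots> = 0" using res_orth ip_comm[of I res] by simp
        finally have "ip I (U' r) (a j) = 0" unfolding U'r ip_scale by simp
        then show ?thesis using split sp True i by simp
      next
        case False
        then have jp: "j = p" using j by simp
        have ap: "a p = (\<lambda>i. res i + (\<Sum>k<r. c k * U k i))" by (simp add: res_def fun_eq_iff)
        have "ip I res (a p) = ip I res res + ip I res (\<lambda>i. \<Sum>k<r. c k * U k i)"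
          by (subst ap) (simp add: ip_def distrib_left sum.distrib)
        also have "ip I res (\<lambda>i. \<Sum>k<r. c k * U k i) = (\<Sum>k<r. c k * ip I res (U k))"
          by (rule ip_expand) simp
        also have "\<dots> = 0" using res_orth ip_comm[of I res] by simp
        finally have "ip I res (a p) = N" by (simp add: N_def)
        then have "ip I (U' r) (a p) * U' r i = res i"
          unfolding U'r ip_scale using Np by simp
        then show ?thesis using split jp by (simp add: res_def c_def)
      qed
    qed
    show ?thesis using on' span' r by (intro exI[of _ U'] exI[of _ "Suc r"]) auto
  qed
qed


definition Af :: "int \<Rightarrow> real \<Rightarrow> real" where
  "Af M c = (\<Sum>j\<in>{-M..M}. exp (- (real_of_int j)\<^sup>2 / 2 + of_int j * c))"

lemma Af_lower:
  assumes "\<bar>c\<bar> \<le> real_of_int M"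
  shows "exp (c^2 / 2 - 1/8) \<le> Af M c"
proof -
  define j0 where "j0 = round c"
  have r: "\<bar>of_int j0 - c\<bar> \<le> 1/2" unfolding j0_def by (rule of_int_round_abs_le)
  have "\<bar>real_of_int j0\<bar> < real_of_int M + 1" using r assms by linarith
  then have "\<bar>j0\<bar> < M + 1" by linarith
  then have j0M: "j0 \<in> {-M..M}" by auto
  have "(of_int j0 - c)^2 \<le> (1/2)^2"
  proof -
    have "\<bar>of_int j0 - c\<bar>^2 \<le> (1/2)^2" by (rule power_mono[OF r]) simp
    then show ?thesis by simp
  qed
  then have "c^2 / 2 - 1/8 \<le> - (real_of_int j0)\<^sup>2 / 2 + of_int j0 * c"
    by (simp add: power2_eq_square algebra_simps)
  then have "exp (c^2 / 2 - 1/8) \<le> exp (- (real_of_int j0)\<^sup>2 / 2 + of_int j0 * c)" by simp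
  also have "\<dots> \<le> Af M c"
    unfolding Af_def by (rule member_le_sum[OF j0M]) auto
  finally show ?thesis .
qed

lemma bern_mgf:
  assumes p: "0 \<le> p" "p \<le> 1"
  shows "measure_pmf.expectation (bernoulli_pmf p) (\<lambda>b. exp (h * (of_bool b - p))) \<le> exp (h^2 / 8)"
proof -
  have key: "exp (h * (1 - p)) * p + exp (- h * p) * (1 - p) \<le> exp (h^2 / 8)"
    if "h \<ge> 0" "0 \<le> p" "p \<le> 1" for h p :: real
  proof -
    have pos: "1 + p * (exp h - 1) > 0"
      using that by (intro add_pos_nonneg mult_nonneg_nonneg) auto
    have "-h * p + ln (1 + p * (exp h - 1)) \<le> h^2 / 8"
      using Hoeffdings_lemma_aux[of h p] that by simp
    then have "exp (-h * p + ln (1 + p * (exp h - 1))) \<le> exp (h^2 / 8)" by simp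
    also have "exp (-h * p + ln (1 + p * (exp h - 1))) = exp (- h * p) * exp (ln (1 + p * (exp h - 1)))"
      by (rule exp_add)
    also have "\<dots> = exp (- h * p) * (1 + p * (exp h - 1))"
      using pos by simp
    also have "exp (- h * p) * (1 + p * (exp h - 1)) = exp (h * (1 - p)) * p + exp (- h * p) * (1 - p)"
      by (simp add: algebra_simps exp_add[symmetric])
    finally show ?thesis .
  qed
  have "measure_pmf.expectation (bernoulli_pmf p) (\<lambda>b. exp (h * (of_bool b - p))) =
        exp (h * (1 - p)) * p + exp (- h * p) * (1 - p)"
    using p by simp
  also have "\<dots> \<le> exp (h^2 / 8)"
  proof (cases "h \<ge> 0")
    case True then show ?thesis using key p by blast
  next
    case False
    have "exp (h * (1 - p)) * p + exp (- h * p) * (1 - p) =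
          exp ((-h) * (1 - (1 - p))) * (1 - p) + exp (- (-h) * (1 - p)) * (1 - (1 - p))"
      by (simp add: algebra_simps)
    also have "\<dots> \<le> exp ((-h)^2 / 8)" using key[of "-h" "1 - p"] False p by simp
    finally show ?thesis by simp
  qed
  finally show ?thesis .
qed

lemma finite_set_Pi_pmf_bool:
  assumes "finite I"
  shows "finite (set_pmf (Pi_pmf I False (q :: 'i \<Rightarrow> bool pmf)))"
proof -
  have "set_pmf (Pi_pmf I False q) \<subseteq> PiE_dflt I False (\<lambda>_. UNIV)"
    using set_Pi_pmf_subset'[OF assms, of False q] by (auto simp: PiE_dflt_def)
  moreover have "finite (PiE_dflt I False (\<lambda>_. UNIV :: bool set))"
    using assms by (intro finite_PiE_dflt) auto
  ultimately show ?thesis by (rule finite_subset)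
qed

lemma mgf_prod:
  assumes fin: "finite I" and p: "\<And>i. i \<in> I \<Longrightarrow> 0 \<le> p i \<and> p i \<le> 1"
  shows "measure_pmf.expectation (Pi_pmf I False (\<lambda>i. bernoulli_pmf (p i)))
           (\<lambda>Y. exp (\<Sum>i\<in>I. v i * (of_bool (Y i) - p i))) \<le> exp ((\<Sum>i\<in>I. (v i)^2) / 8)"
proof -
  have "measure_pmf.expectation (Pi_pmf I False (\<lambda>i. bernoulli_pmf (p i)))
           (\<lambda>Y. exp (\<Sum>i\<in>I. v i * (of_bool (Y i) - p i))) =
        measure_pmf.expectation (Pi_pmf I False (\<lambda>i. bernoulli_pmf (p i)))
           (\<lambda>Y. \<Prod>i\<in>I. exp (v i * (of_bool (Y i) - p i)))"
    using fin by (simp add: exp_sum)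
  also have "\<dots> = (\<Prod>i\<in>I. measure_pmf.expectation (bernoulli_pmf (p i)) (\<lambda>b. exp (v i * (of_bool b - p i))))"
  proof (rule expectation_prod_Pi_pmf[OF fin])
    fix i assume "i \<in> I"
    have "finite (set_pmf (bernoulli_pmf (p i)))" by (rule finite_subset[of _ UNIV]) auto
    then show "integrable (measure_pmf (bernoulli_pmf (p i))) (\<lambda>b. exp (v i * (of_bool b - p i)))"
      by (rule integrable_measure_pmf_finite)
  qed auto
  also have "\<dots> \<le> (\<Prod>i\<in>I. exp ((v i)^2 / 8))"
    by (intro prod_mono conjI bern_mgf integral_nonneg_AE AE_I2) (use p in auto)
  also have "\<dots> = exp ((\<Sum>i\<in>I. (v i)^2) / 8)"
    using fin by (simp add: exp_sum[symmetric] sum_divide_distrib)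
  finally show ?thesis .
qed

lemma sym_geom_sum:
  fixes x :: real
  shows "(\<Sum>j\<in>{-int N..int N}. x ^ nat \<bar>j\<bar>) = 1 + 2 * (\<Sum>n\<in>{1..N}. x ^ n)"
proof (induction N)
  case 0
  then show ?case by simp
next
  case (Suc N)
  have eq: "{-int (Suc N)..int (Suc N)} = insert (int (Suc N)) (insert (- int (Suc N)) {-int N..int N})"
    by auto
  have "(\<Sum>j\<in>{-int (Suc N)..int (Suc N)}. x ^ nat \<bar>j\<bar>) = x ^ Suc N + x ^ Suc N + (\<Sum>j\<in>{-int N..int N}. x ^ nat \<bar>j\<bar>)"
  proof -
    have [simp]: "nat (1 + int N) = Suc N" "nat (int N + 1) = Suc N" by auto
    show ?thesis unfolding eq by simp
  qed
  also have "\<dots> = 1 + 2 * (\<Sum>n\<in>{1..Suc N}. x ^ n)"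
    using Suc by simp
  finally show ?case .
qed

definition B0 :: real where "B0 = 1 + 2 / (1 - exp (- 3 / 8))"

lemma B0_bound:
  shows "(\<Sum>j\<in>{-M..M}. exp (- 3 * (real_of_int j)\<^sup>2 / 8)) \<le> B0"
proof (cases "M \<ge> 0")
  case False
  then have "{-M..M} = {}" by auto
  then show ?thesis by (simp add: B0_def)
next
  case True
  define x where "x = exp (- 3 / 8 :: real)"
  have x0: "0 \<le> x" "x < 1" by (auto simp: x_def)
  define N where "N = nat M"
  have MN: "M = int N" using True by (simp add: N_def)
  have tm: "exp (- 3 * (real_of_int j)\<^sup>2 / 8) \<le> x ^ nat \<bar>j\<bar>" for j :: int
  proof -
    have "x ^ nat \<bar>j\<bar> = exp (real (nat \<bar>j\<bar>) * (- 3 / 8))"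
      unfolding x_def by (rule exp_of_nat_mult[symmetric])
    also have "real (nat \<bar>j\<bar>) = \<bar>real_of_int j\<bar>" by simp
    finally have xe: "x ^ nat \<bar>j\<bar> = exp (\<bar>real_of_int j\<bar> * (- 3 / 8))" .
    have "\<bar>real_of_int j\<bar> \<le> (real_of_int j)\<^sup>2"
    proof (cases "j = 0")
      case True then show ?thesis by simp
    next
      case False
      then have "1 \<le> \<bar>real_of_int j\<bar>" by linarith
      then have "\<bar>real_of_int j\<bar> * 1 \<le> \<bar>real_of_int j\<bar> * \<bar>real_of_int j\<bar>"
        by (intro mult_left_mono) auto
      then show ?thesis by (simp add: power2_eq_square)
    qed
    then have "- 3 * (real_of_int j)\<^sup>2 / 8 \<le> \<bar>real_of_int j\<bar> * (- 3 / 8)" by simp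
    then show ?thesis unfolding xe by simp
  qed
  have "(\<Sum>j\<in>{-M..M}. exp (- 3 * (real_of_int j)\<^sup>2 / 8)) \<le> (\<Sum>j\<in>{-M..M}. x ^ nat \<bar>j\<bar>)"
    by (intro sum_mono tm)
  also have "\<dots> = 1 + 2 * (\<Sum>n\<in>{1..N}. x ^ n)" unfolding MN by (rule sym_geom_sum)
  also have "(\<Sum>n\<in>{1..N}. x ^ n) \<le> (\<Sum>n<Suc N. x ^ n)"
    by (intro sum_mono2) (use x0 in auto)
  also have "(\<Sum>n<Suc N. x ^ n) = (1 - x ^ Suc N) / (1 - x)"
  proof -
    have "(\<Sum>n<Suc N. x ^ n) = (x ^ Suc N - 1) / (x - 1)" using x0 by (intro geometric_sum) simp
    also have "\<dots> = (1 - x ^ Suc N) / (1 - x)" by (metis minus_diff_eq minus_divide_divide)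
    finally show ?thesis .
  qed
  also have "\<dots> \<le> 1 / (1 - x)"
    using x0 by (intro divide_right_mono) auto
  finally show ?thesis by (simp add: B0_def x_def)
qed

lemma orth_norm:
  assumes on: "orthonormal I r U"
  shows "(\<Sum>i\<in>I. (\<Sum>k<r. a k * U k i)^2) = (\<Sum>k<r. (a k)^2)"
proof -
  define v where "v = (\<lambda>i. \<Sum>k<r. a k * U k i)"
  have "ip I v v = (\<Sum>k<r. a k * ip I v (U k))" by (rule ip_expand) (simp add: v_def)
  also have "\<dots> = (\<Sum>k<r. a k * a k)"
  proof (rule sum.cong)
    fix k assume k: "k \<in> {..<r}"
    have "ip I v (U k) = ip I (U k) v" by (rule ip_comm)
    also have "\<dots> = (\<Sum>l<r. a l * ip I (U k) (U l))" by (rule ip_expand) (simp add: v_def)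
    also have "\<dots> = a k" using ip_orth_sum[OF on] k by simp
    finally show "a k * ip I v (U k) = a k * a k" by simp
  qed simp
  finally show ?thesis by (simp add: ip_def v_def power2_eq_square)
qed

lemma abs_U_le1:
  assumes on: "orthonormal I r U" and k: "k < r" and i: "i \<in> I" and fin: "finite I"
  shows "\<bar>U k i\<bar> \<le> 1"
proof -
  have "(U k i)^2 \<le> (\<Sum>j\<in>I. U k j * U k j)"
    using member_le_sum[of i I "\<lambda>j. U k j * U k j"] i fin by (simp add: power2_eq_square)
  also have "\<dots> = 1" using on k by (simp add: orthonormal_def ip_def)
  finally show ?thesis by (simp add: abs_square_le_1)
qed

lemma conc_mgf:
  fixes I :: "'i set" and p :: "'i \<Rightarrow> real" and U :: "nat \<Rightarrow> 'i \<Rightarrow> real"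
  assumes fin: "finite I" and p: "\<And>i. i \<in> I \<Longrightarrow> 0 \<le> p i \<and> p i \<le> 1" and on: "orthonormal I r U"
  shows "measure_pmf.expectation (Pi_pmf I False (\<lambda>i. bernoulli_pmf (p i)))
     (\<lambda>Y. exp ((\<Sum>k<r. (ip I (U k) (\<lambda>i. of_bool (Y i) - p i))^2) / 2)) \<le> exp (real r / 8) * B0 ^ r"
proof -
  define P where "P = Pi_pmf I False (\<lambda>i. bernoulli_pmf (p i))"
  have intg: "integrable (measure_pmf P) f" for f :: "_ \<Rightarrow> real"
    unfolding P_def by (rule integrable_measure_pmf_finite[OF finite_set_Pi_pmf_bool[OF fin]])
  define w where "w = (\<lambda>Y i. of_bool (Y i) - p i)"
  define c where "c = (\<lambda>Y k. ip I (U k) (w Y))"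
  define M where "M = int (card I)"
  define J where "J = {-M..M}"
  define Xi where "Xi = PiE {..<r} (\<lambda>_. J)"
  define v where "v = (\<lambda>(\<xi>::nat \<Rightarrow> int) i. \<Sum>k<r. real_of_int (\<xi> k) * U k i)"
  define S where "S = (\<lambda>(\<xi>::nat \<Rightarrow> int). \<Sum>k<r. (real_of_int (\<xi> k))^2)"
  have finXi: "finite Xi" unfolding Xi_def J_def by (intro finite_PiE) auto
  have cb: "\<bar>c Y k\<bar> \<le> real_of_int M" if "k < r" for Y k
  proof -
    have "\<bar>c Y k\<bar> \<le> (\<Sum>i\<in>I. \<bar>U k i * w Y i\<bar>)"
      unfolding c_def ip_def by (rule sum_abs)
    also have "\<dots> \<le> (\<Sum>i\<in>I. 1)"
    proof (rule sum_mono)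
      fix i assume i: "i \<in> I"
      have "\<bar>U k i\<bar> \<le> 1" by (rule abs_U_le1[OF on that i fin])
      moreover have "\<bar>w Y i\<bar> \<le> 1" using p[OF i] by (auto simp: w_def)
      ultimately show "\<bar>U k i * w Y i\<bar> \<le> 1" by (simp add: abs_mult mult_le_one)
    qed
    finally show ?thesis by (simp add: M_def)
  qed
  have pw1: "exp ((\<Sum>k<r. (c Y k)^2) / 2) \<le> exp (real r / 8) * (\<Prod>k<r. Af M (c Y k))" for Y
  proof -
    have "exp ((\<Sum>k<r. (c Y k)^2) / 2) = exp (real r / 8) * (\<Prod>k<r. exp ((c Y k)^2 / 2 - 1/8))"
      by (simp add: exp_sum[symmetric] exp_add[symmetric] sum_subtractf sum_divide_distrib)
    also have "(\<Prod>k<r. exp ((c Y k)^2 / 2 - 1/8)) \<le> (\<Prod>k<r. Af M (c Y k))"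
      by (intro prod_mono conjI Af_lower cb) auto
    finally show ?thesis by simp
  qed
  have pw2: "(\<Prod>k<r. Af M (c Y k)) = (\<Sum>\<xi>\<in>Xi. exp (- S \<xi> / 2) * exp (\<Sum>i\<in>I. v \<xi> i * w Y i))" for Y
  proof -
    have "(\<Prod>k<r. Af M (c Y k)) = (\<Sum>\<xi>\<in>Xi. \<Prod>k<r. exp (- (real_of_int (\<xi> k))\<^sup>2 / 2 + of_int (\<xi> k) * c Y k))"
      unfolding Af_def Xi_def J_def by (rule prod_sum_PiE) auto
    also have "\<dots> = (\<Sum>\<xi>\<in>Xi. exp (- S \<xi> / 2) * exp (\<Sum>i\<in>I. v \<xi> i * w Y i))"
    proof (rule sum.cong)
      fix \<xi> assume "\<xi> \<in> Xi"
      have e1: "(\<Sum>k<r. of_int (\<xi> k) * c Y k) = (\<Sum>i\<in>I. v \<xi> i * w Y i)"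
      proof -
        have "(\<Sum>k<r. of_int (\<xi> k) * c Y k) = (\<Sum>k<r. \<Sum>i\<in>I. of_int (\<xi> k) * U k i * w Y i)"
          by (simp add: c_def ip_def sum_distrib_left mult.assoc)
        also have "\<dots> = (\<Sum>i\<in>I. \<Sum>k<r. of_int (\<xi> k) * U k i * w Y i)" by (rule sum.swap)
        also have "\<dots> = (\<Sum>i\<in>I. v \<xi> i * w Y i)" by (simp add: v_def sum_distrib_right)
        finally show ?thesis .
      qed
      have "(\<Prod>k<r. exp (- (real_of_int (\<xi> k))\<^sup>2 / 2 + of_int (\<xi> k) * c Y k))
          = exp (\<Sum>k<r. - (real_of_int (\<xi> k))\<^sup>2 / 2 + of_int (\<xi> k) * c Y k)"
        by (simp add: exp_sum)
      also have "(\<Sum>k<r. - (real_of_int (\<xi> k))\<^sup>2 / 2 + of_int (\<xi> k) * c Y k) = - S \<xi> / 2 + (\<Sum>k<r. of_int (\<xi> k) * c Y k)"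
        by (simp add: S_def sum.distrib sum_negf sum_divide_distrib sum_subtractf)
      finally show "(\<Prod>k<r. exp (- (real_of_int (\<xi> k))\<^sup>2 / 2 + of_int (\<xi> k) * c Y k)) = exp (- S \<xi> / 2) * exp (\<Sum>i\<in>I. v \<xi> i * w Y i)"
        by (simp only: e1 exp_add)
    qed simp
    finally show ?thesis .
  qed
  have mgf: "measure_pmf.expectation P (\<lambda>Y. exp (\<Sum>i\<in>I. v \<xi> i * w Y i)) \<le> exp (S \<xi> / 8)" for \<xi>
  proof -
    have "measure_pmf.expectation P (\<lambda>Y. exp (\<Sum>i\<in>I. v \<xi> i * w Y i)) \<le> exp ((\<Sum>i\<in>I. (v \<xi> i)^2) / 8)"
      unfolding P_def w_def by (rule mgf_prod[OF fin p])
    also have "(\<Sum>i\<in>I. (v \<xi> i)^2) = S \<xi>"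
      unfolding v_def S_def by (rule orth_norm[OF on])
    finally show ?thesis .
  qed
  have "measure_pmf.expectation P (\<lambda>Y. exp ((\<Sum>k<r. (c Y k)^2) / 2))
      \<le> measure_pmf.expectation P (\<lambda>Y. exp (real r / 8) * (\<Sum>\<xi>\<in>Xi. exp (- S \<xi> / 2) * exp (\<Sum>i\<in>I. v \<xi> i * w Y i)))"
    by (intro integral_mono intg) (use pw1 pw2 in metis)
  also have "\<dots> = exp (real r / 8) * (\<Sum>\<xi>\<in>Xi. exp (- S \<xi> / 2) * measure_pmf.expectation P (\<lambda>Y. exp (\<Sum>i\<in>I. v \<xi> i * w Y i)))"
    by (simp add: integral_sum intg)
  also have "\<dots> \<le> exp (real r / 8) * (\<Sum>\<xi>\<in>Xi. exp (- S \<xi> / 2) * exp (S \<xi> / 8))"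
    by (intro mult_left_mono sum_mono mgf) auto
  also have "(\<Sum>\<xi>\<in>Xi. exp (- S \<xi> / 2) * exp (S \<xi> / 8)) = (\<Sum>\<xi>\<in>Xi. \<Prod>k<r. exp (- 3 * (real_of_int (\<xi> k))\<^sup>2 / 8))"
  proof (rule sum.cong)
    fix \<xi> :: "nat \<Rightarrow> int"
    have "exp (- S \<xi> / 2) * exp (S \<xi> / 8) = exp (\<Sum>k<r. - 3 * (real_of_int (\<xi> k))\<^sup>2 / 8)"
      by (simp add: S_def exp_add[symmetric] sum_distrib_left sum_divide_distrib[symmetric])
    then show "exp (- S \<xi> / 2) * exp (S \<xi> / 8) = (\<Prod>k<r. exp (- 3 * (real_of_int (\<xi> k))\<^sup>2 / 8))"
      by (simp add: exp_sum)
  qed simp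
  also have "\<dots> = (\<Prod>k<r. \<Sum>j\<in>J. exp (- 3 * (real_of_int j)\<^sup>2 / 8))"
    unfolding Xi_def by (rule prod_sum_PiE[symmetric]) (auto simp: J_def)
  also have "\<dots> \<le> (\<Prod>k<r. B0)"
    unfolding J_def by (intro prod_mono conjI B0_bound sum_nonneg) auto
  also have "\<dots> = B0 ^ r" by simp
  finally show ?thesis by (simp add: P_def c_def w_def)
qed

definition c1 :: real where "c1 = 1/8 + ln B0"

lemma B0_pos: "B0 > 1"
proof -
  have "exp (- 3 / 8 :: real) < 1" by simp
  then have "2 / (1 - exp (- 3 / 8 :: real)) > 0" by simp
  then show ?thesis by (simp add: B0_def)
qed

lemma c1_pos: "c1 > 0"
  using B0_pos by (simp add: c1_def add_pos_nonneg)

lemma conc_tail: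
  fixes I :: "'i set" and p :: "'i \<Rightarrow> real" and U :: "nat \<Rightarrow> 'i \<Rightarrow> real"
  assumes fin: "finite I" and p: "\<And>i. i \<in> I \<Longrightarrow> 0 \<le> p i \<and> p i \<le> 1" and on: "orthonormal I r U"
    and \<alpha>: "0 < \<alpha>"
  shows "measure_pmf.prob (Pi_pmf I False (\<lambda>i. bernoulli_pmf (p i)))
     {Y. (\<Sum>k<r. (ip I (U k) (\<lambda>i. of_bool (Y i) - p i))^2) \<le> 2 * (c1 * real r + ln (1 / \<alpha>))} \<ge> 1 - \<alpha>"
proof -
  define P where "P = Pi_pmf I False (\<lambda>i. bernoulli_pmf (p i))"
  define T where "T = (\<lambda>Y. (\<Sum>k<r. (ip I (U k) (\<lambda>i. of_bool (Y i) - p i))^2))"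
  define K where "K = 2 * (c1 * real r + ln (1 / \<alpha>))"
  have intg: "integrable (measure_pmf P) f" for f :: "_ \<Rightarrow> real"
    unfolding P_def by (rule integrable_measure_pmf_finite[OF finite_set_Pi_pmf_bool[OF fin]])
  have E: "measure_pmf.expectation P (\<lambda>Y. exp (T Y / 2)) \<le> exp (real r / 8) * B0 ^ r"
    unfolding P_def T_def by (rule conc_mgf[OF fin p on])
  have eB: "exp (real r / 8) * B0 ^ r = exp (c1 * real r)"
  proof -
    have "exp (c1 * real r) = exp (real r / 8) * exp (real r * ln B0)"
      by (simp add: c1_def exp_add[symmetric] algebra_simps)
    also have "exp (real r * ln B0) = exp (ln B0) ^ r" by (rule exp_of_nat_mult)
    also have "exp (ln B0) = B0" using B0_pos by simp
    finally show ?thesis by simp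
  qed
  have eK: "exp (K / 2) = exp (c1 * real r) / \<alpha>"
  proof -
    have "K / 2 = c1 * real r - ln \<alpha>" using \<alpha> by (simp add: K_def ln_div)
    then have "exp (K / 2) = exp (c1 * real r) / exp (ln \<alpha>)" by (simp only: exp_diff)
    then show ?thesis using \<alpha> by simp
  qed
  have "measure_pmf.prob P {Y \<in> space (measure_pmf P). exp (T Y / 2) \<ge> exp (K / 2)}
      \<le> measure_pmf.expectation P (\<lambda>Y. exp (T Y / 2)) / exp (K / 2)"
    by (rule integral_Markov_inequality_measure[where A=UNIV]) (auto intro: intg)
  also have "\<dots> \<le> exp (c1 * real r) / exp (K / 2)"
    using E eB by (intro divide_right_mono) auto
  also have "\<dots> = \<alpha>" using \<alpha> by (simp add: eK)
  finally have tail: "measure_pmf.prob P {Y. K < T Y} \<le> \<alpha>"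
  proof -
    assume a: "measure_pmf.prob P {Y \<in> space (measure_pmf P). exp (T Y / 2) \<ge> exp (K / 2)} \<le> \<alpha>"
    have "{Y. K < T Y} \<subseteq> {Y \<in> space (measure_pmf P). exp (T Y / 2) \<ge> exp (K / 2)}" by auto
    then have "measure_pmf.prob P {Y. K < T Y} \<le> measure_pmf.prob P {Y \<in> space (measure_pmf P). exp (T Y / 2) \<ge> exp (K / 2)}"
      by (intro measure_pmf.finite_measure_mono) auto
    then show ?thesis using a by simp
  qed
  have "measure_pmf.prob P {Y. T Y \<le> K} = 1 - measure_pmf.prob P {Y. K < T Y}"
  proof -
    have "{Y. T Y \<le> K} = space (measure_pmf P) - {Y. K < T Y}" by auto
    then show ?thesis using measure_pmf.prob_compl[of "{Y. K < T Y}" P] by simp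
  qed
  then show ?thesis using tail by (simp add: P_def T_def K_def)
qed


lemma flip_pmf:
  assumes "0 \<le> q" "q \<le> 1"
  shows "pmf (map_pmf (\<lambda>keep. if keep then b else \<not> b) (bernoulli_pmf q)) x = (if x = b then q else 1 - q)"
proof -
  define g where "g = (\<lambda>keep. if keep then b else \<not> b)"
  have inj: "inj g" unfolding g_def by (cases b) (auto simp: inj_def)
  have gx: "g (x = b) = x" unfolding g_def by (cases b; cases x) auto
  have "pmf (map_pmf g (bernoulli_pmf q)) x = pmf (map_pmf g (bernoulli_pmf q)) (g (x = b))" by (simp add: gx)
  also have "\<dots> = pmf (bernoulli_pmf q) (x = b)" by (rule pmf_map_inj'[OF inj])
  also have "\<dots> = (if x = b then q else 1 - q)" using assms by (cases "x = b") auto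
  finally show ?thesis by (simp add: g_def)
qed

lemma rr_coord:
  assumes "0 \<le> q" "q \<le> 1" "0 \<le> s" "s \<le> 1"
  shows "bind_pmf (bernoulli_pmf s) (\<lambda>b. map_pmf (\<lambda>keep. if keep then b else \<not> b) (bernoulli_pmf q))
       = bernoulli_pmf (q * s + (1 - q) * (1 - s))"
proof (rule pmf_eqI)
  fix x :: bool
  have r0: "0 \<le> q * s + (1 - q) * (1 - s)" using assms by (intro add_nonneg_nonneg mult_nonneg_nonneg) auto
  have r1: "q * s + (1 - q) * (1 - s) \<le> 1"
  proof -
    have "q * s + (1 - q) * (1 - s) \<le> q * 1 + (1 - q) * 1"
      using assms by (intro add_mono mult_left_mono) auto
    then show ?thesis by simp
  qed
  show "pmf (bind_pmf (bernoulli_pmf s) (\<lambda>b. map_pmf (\<lambda>keep. if keep then b else \<not> b) (bernoulli_pmf q))) x =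
        pmf (bernoulli_pmf (q * s + (1 - q) * (1 - s))) x"
    using assms r0 r1 by (cases x) (simp_all add: pmf_bind flip_pmf algebra_simps)
qed

lemma rr_joint:
  assumes fin: "finite I" and q: "0 \<le> q" "q \<le> 1" and s: "\<And>i. 0 \<le> s i \<and> s i \<le> 1"
  shows "bind_pmf (Pi_pmf I False (\<lambda>ij. bernoulli_pmf (s ij)))
           (\<lambda>y. Pi_pmf I False (\<lambda>ij. map_pmf (\<lambda>keep. if keep then y ij else \<not> y ij) (bernoulli_pmf q)))
       = Pi_pmf I False (\<lambda>ij. bernoulli_pmf (q * s ij + (1 - q) * (1 - s ij)))"
proof -
  have "Pi_pmf I False (\<lambda>ij. bernoulli_pmf (q * s ij + (1 - q) * (1 - s ij))) =
        Pi_pmf I False (\<lambda>ij. bind_pmf (bernoulli_pmf (s ij)) (\<lambda>b. map_pmf (\<lambda>keep. if keep then b else \<not> b) (bernoulli_pmf q)))"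
    using rr_coord q s by simp
  also have "\<dots> = bind_pmf (Pi_pmf I False (\<lambda>ij. bernoulli_pmf (s ij)))
           (\<lambda>y. Pi_pmf I False (\<lambda>ij. map_pmf (\<lambda>keep. if keep then y ij else \<not> y ij) (bernoulli_pmf q)))"
    by (rule Pi_pmf_bind[OF fin])
  finally show ?thesis by simp
qed

lemma prob_le_pointwise:
  fixes M N :: "'a pmf"
  assumes S: "finite S" "set_pmf M \<subseteq> S" "set_pmf N \<subseteq> S"
    and pw: "\<And>x. pmf M x \<le> c * pmf N x" and c: "c \<ge> 0"
  shows "measure_pmf.prob M A \<le> c * measure_pmf.prob N A"
proof -
  have eqM: "measure_pmf.prob M A = measure_pmf.prob M (A \<inter> S)"
  proof (rule antisym)
    have "measure_pmf.prob M A = measure_pmf.prob M (A \<inter> set_pmf M)" by (simp add: measure_Int_set_pmf)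
    also have "\<dots> \<le> measure_pmf.prob M (A \<inter> S)" using S by (intro measure_pmf.finite_measure_mono) auto
    finally show "measure_pmf.prob M A \<le> measure_pmf.prob M (A \<inter> S)" .
    show "measure_pmf.prob M (A \<inter> S) \<le> measure_pmf.prob M A" by (intro measure_pmf.finite_measure_mono) auto
  qed
  have eqN: "measure_pmf.prob N A = measure_pmf.prob N (A \<inter> S)"
  proof (rule antisym)
    have "measure_pmf.prob N A = measure_pmf.prob N (A \<inter> set_pmf N)" by (simp add: measure_Int_set_pmf)
    also have "\<dots> \<le> measure_pmf.prob N (A \<inter> S)" using S by (intro measure_pmf.finite_measure_mono) auto
    finally show "measure_pmf.prob N A \<le> measure_pmf.prob N (A \<inter> S)" .
    show "measure_pmf.prob N (A \<inter> S) \<le> measure_pmf.prob N A" by (intro measure_pmf.finite_measure_mono) auto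
  qed
  have fin: "finite (A \<inter> S)" using S by simp
  have "measure_pmf.prob M A = (\<Sum>x\<in>A \<inter> S. pmf M x)" using eqM measure_measure_pmf_finite[OF fin] by simp
  also have "\<dots> \<le> (\<Sum>x\<in>A \<inter> S. c * pmf N x)" by (intro sum_mono pw)
  also have "\<dots> = c * measure_pmf.prob N A" using eqN measure_measure_pmf_finite[OF fin] by (simp add: sum_distrib_left)
  finally show ?thesis .
qed

lemma sigmoid_ratio:
  assumes "t \<ge> 0"
  shows "sigmoid t \<le> exp t * (1 - sigmoid t)" "1 - sigmoid t \<le> exp t * sigmoid t"
proof -
  have e: "exp t * (1 - sigmoid t) = sigmoid t"
    using onepexp_ne[of t] by (simp add: one_minus_sigmoid sigmoid_def exp_minus field_simps)
  then show "sigmoid t \<le> exp t * (1 - sigmoid t)" by simp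
  have "exp (- t) \<le> 1" using assms by simp
  then have "1 - sigmoid t \<le> sigmoid t"
    using onepexp_pos[of t] by (simp add: one_minus_sigmoid sigmoid_def divide_right_mono)
  also have "sigmoid t \<le> exp t * sigmoid t"
    using assms sigmoid_pos[of t] by (intro mult_right_mono[of 1 "exp t", simplified]) auto
  finally show "1 - sigmoid t \<le> exp t * sigmoid t" .
qed

lemma rr_pmf_ratio:
  assumes k: "k < n" and m: "m \<ge> 1" and eps: "\<epsilon> \<ge> 0"
    and agree: "\<forall>i<n. \<forall>j<m. i \<noteq> k \<longrightarrow> y (i, j) = y' (i, j)"
  shows "pmf (rr_pmf \<epsilon> n m y) \<omega> \<le> exp \<epsilon> * pmf (rr_pmf \<epsilon> n m y') \<omega>"
proof -
  define I where "I = sample_idx n m"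
  define q where "q = sigmoid (\<epsilon> / real m)"
  define c where "c = exp (\<epsilon> / real m)"
  have fin: "finite I" by (simp add: I_def sample_idx_def)
  have q01: "0 \<le> q" "q \<le> 1" using sigmoid_pos sigmoid_lt1 unfolding q_def by (auto intro: less_imp_le)
  have t0: "\<epsilon> / real m \<ge> 0" using eps by simp
  define f where "f = (\<lambda>z x. if \<omega> x = z x then q else 1 - q)"
  have pmfeq: "pmf (rr_pmf \<epsilon> n m z) \<omega> = (if (\<forall>x. x \<notin> I \<longrightarrow> \<omega> x = False) then \<Prod>x\<in>I. f z x else 0)" for z
    unfolding rr_pmf_def I_def[symmetric] using fin q01
    by (subst pmf_Pi[OF fin]) (simp add: flip_pmf f_def q_def[symmetric] cong: if_cong)
  define Ik where "Ik = {k} \<times> {..<m}"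
  have fle: "f y x \<le> (if x \<in> Ik then c else 1) * f y' x" if xI: "x \<in> I" for x
  proof (cases "x \<in> Ik")
    case True
    have c1: "c \<ge> 1" using t0 by (simp add: c_def)
    have a1: "q \<le> c * (1 - q)" "1 - q \<le> c * q" using sigmoid_ratio[OF t0] by (simp_all add: c_def q_def)
    have a2: "q \<le> c * q" "1 - q \<le> c * (1 - q)" using c1 q01 by (simp_all add: mult_le_cancel_right1)
    have "f y x \<le> c * f y' x"
      using a1 a2 unfolding f_def by (cases "\<omega> x = y x"; cases "\<omega> x = y' x") auto
    then show ?thesis using True by simp
  next
    case False
    obtain i j where x: "x = (i, j)" "i < n" "j < m" using xI by (auto simp: I_def sample_idx_def)
    have "i \<noteq> k" using False x by (auto simp: Ik_def)
    then have "y x = y' x" using agree x by auto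
    then show ?thesis using False by (simp add: f_def)
  qed
  have "(\<Prod>x\<in>I. f y x) \<le> (\<Prod>x\<in>I. (if x \<in> Ik then c else 1) * f y' x)"
    by (intro prod_mono conjI fle) (use q01 in \<open>auto simp: f_def\<close>)
  also have "\<dots> = (\<Prod>x\<in>I. if x \<in> Ik then c else 1) * (\<Prod>x\<in>I. f y' x)"
    by (rule prod.distrib)
  also have "(\<Prod>x\<in>I. if x \<in> Ik then c else 1) = c ^ card (I \<inter> Ik)"
    using fin by (simp add: prod.If_cases)
  also have "I \<inter> Ik = Ik" using k by (auto simp: I_def Ik_def sample_idx_def)
  also have "c ^ card Ik = exp \<epsilon>"
  proof -
    have "card Ik = m" by (simp add: Ik_def card_cartesian_product)
    then have "c ^ card Ik = exp (real m * (\<epsilon> / real m))" unfolding c_def by (simp only: exp_of_nat_mult)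
    also have "\<dots> = exp \<epsilon>" using m by simp
    finally show ?thesis .
  qed
  finally have main: "(\<Prod>x\<in>I. f y x) \<le> exp \<epsilon> * (\<Prod>x\<in>I. f y' x)" .
  show ?thesis
  proof (cases "\<forall>x. x \<notin> I \<longrightarrow> \<omega> x = False")
    case True
    show ?thesis unfolding pmfeq if_P[OF True] by (rule main)
  next
    case False
    show ?thesis unfolding pmfeq if_not_P[OF False] by simp
  qed
qed

lemma rr_dp:
  assumes m: "m \<ge> 1" and eps: "\<epsilon> \<ge> 0"
  shows "user_label_dp \<epsilon> n m (\<lambda>y. map_pmf \<theta>hat (rr_pmf \<epsilon> n m y))"
  unfolding user_label_dp_def
proof (intro allI impI)
  fix k and y y' :: "nat \<times> nat \<Rightarrow> bool" and E assume k: "k < n" and agree: "\<forall>i<n. \<forall>j<m. i \<noteq> k \<longrightarrow> y (i, j) = y' (i, j)"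
  define S where "S = PiE_dflt (sample_idx n m) False (\<lambda>_. UNIV :: bool set)"
  have fin: "finite (sample_idx n m)" by (simp add: sample_idx_def)
  have finS: "finite S" unfolding S_def using fin by (intro finite_PiE_dflt) auto
  have sub: "set_pmf (rr_pmf \<epsilon> n m z) \<subseteq> S" for z
    unfolding rr_pmf_def S_def using set_Pi_pmf_subset[OF fin] by (fastforce simp: PiE_dflt_def)
  have "measure_pmf.prob (rr_pmf \<epsilon> n m y) (\<theta>hat -` E) \<le> exp \<epsilon> * measure_pmf.prob (rr_pmf \<epsilon> n m y') (\<theta>hat -` E)"
    by (rule prob_le_pointwise[OF finS sub sub rr_pmf_ratio[OF k m eps agree]]) simp
  then show "measure_pmf.prob (map_pmf \<theta>hat (rr_pmf \<epsilon> n m y)) E \<le> exp \<epsilon> * measure_pmf.prob (map_pmf \<theta>hat (rr_pmf \<epsilon> n m y')) E"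
    by (simp add: measure_map_pmf)
qed


lemma sum_pairs: "(\<Sum>i<n. \<Sum>j<m. F (i, j)) = (\<Sum>p\<in>sample_idx n m. F p)"
  unfolding sample_idx_def by (simp add: sum.cartesian_product case_prod_beta')

lemma vnorm_L2: "vnorm d v = L2_set v {..<d}"
  by (simp add: vnorm_def L2_set_def)

lemma vinner_bound: "\<bar>vinner d u v\<bar> \<le> vnorm d u * vnorm d v"
proof -
  have "\<bar>vinner d u v\<bar> \<le> (\<Sum>k<d. \<bar>u k\<bar> * \<bar>v k\<bar>)"
    unfolding vinner_def by (rule order.trans[OF sum_abs]) (simp add: abs_mult)
  also have "\<dots> \<le> L2_set u {..<d} * L2_set v {..<d}" by (rule L2_set_mult_ineq)
  finally show ?thesis by (simp add: vnorm_L2)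
qed

lemma vnorm_diff: "vnorm d (\<lambda>k. f k - g k) \<le> vnorm d f + vnorm d g"
proof -
  have "L2_set (\<lambda>k. f k + (- g k)) {..<d} \<le> L2_set f {..<d} + L2_set (\<lambda>k. - g k) {..<d}"
    by (rule L2_set_triangle_ineq)
  moreover have "L2_set (\<lambda>k. - g k) {..<d} = L2_set g {..<d}" by (simp add: L2_set_def)
  ultimately show ?thesis by (simp add: vnorm_L2)
qed

lemma vinner_diff_right: "vinner d u (\<lambda>k. a k - b k) = vinner d u a - vinner d u b"
  by (simp add: vinner_def sum_subtractf algebra_simps)

lemma swap4: "(\<Sum>k\<in>K. \<Sum>l\<in>L. \<Sum>i\<in>A. \<Sum>j\<in>B. f k l i j) = (\<Sum>i\<in>A. \<Sum>j\<in>B. \<Sum>k\<in>K. \<Sum>l\<in>L. (f k l i j :: real))"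
proof -
  have "(\<Sum>k\<in>K. \<Sum>l\<in>L. \<Sum>i\<in>A. \<Sum>j\<in>B. f k l i j) = (\<Sum>k\<in>K. \<Sum>i\<in>A. \<Sum>j\<in>B. \<Sum>l\<in>L. f k l i j)"
  proof (rule sum.cong[OF refl])
    fix k
    have "(\<Sum>l\<in>L. \<Sum>i\<in>A. \<Sum>j\<in>B. f k l i j) = (\<Sum>i\<in>A. \<Sum>l\<in>L. \<Sum>j\<in>B. f k l i j)" by (rule sum.swap)
    also have "\<dots> = (\<Sum>i\<in>A. \<Sum>j\<in>B. \<Sum>l\<in>L. f k l i j)" by (rule sum.cong[OF refl]) (rule sum.swap)
    finally show "(\<Sum>l\<in>L. \<Sum>i\<in>A. \<Sum>j\<in>B. f k l i j) = (\<Sum>i\<in>A. \<Sum>j\<in>B. \<Sum>l\<in>L. f k l i j)" .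
  qed
  also have "\<dots> = (\<Sum>i\<in>A. \<Sum>k\<in>K. \<Sum>j\<in>B. \<Sum>l\<in>L. f k l i j)" by (rule sum.swap)
  also have "\<dots> = (\<Sum>i\<in>A. \<Sum>j\<in>B. \<Sum>k\<in>K. \<Sum>l\<in>L. f k l i j)" by (rule sum.cong[OF refl]) (rule sum.swap)
  finally show ?thesis .
qed

lemma qf_gram:
  assumes "n \<ge> 1" "m \<ge> 1"
  shows "real n * real m * qf d (gram n m x) D = (\<Sum>p\<in>sample_idx n m. (vinner d (x (fst p) (snd p)) D)^2)"
proof -
  have "qf d (gram n m x) D = (1 / (real n * real m)) * (\<Sum>k<d. \<Sum>l<d. \<Sum>i<n. \<Sum>j<m. x i j k * x i j l * D k * D l)"
    by (simp add: qf_def gram_def sum_distrib_left sum_distrib_right algebra_simps)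
  also have "(\<Sum>k<d. \<Sum>l<d. \<Sum>i<n. \<Sum>j<m. x i j k * x i j l * D k * D l) = (\<Sum>i<n. \<Sum>j<m. (vinner d (x i j) D)^2)"
  proof -
    have "(\<Sum>k<d. \<Sum>l<d. \<Sum>i<n. \<Sum>j<m. x i j k * x i j l * D k * D l) = (\<Sum>i<n. \<Sum>j<m. \<Sum>k<d. \<Sum>l<d. x i j k * x i j l * D k * D l)"
      by (rule swap4)
    also have "\<dots> = (\<Sum>i<n. \<Sum>j<m. (vinner d (x i j) D)^2)"
      by (simp add: vinner_def power2_eq_square sum_product algebra_simps)
    finally show ?thesis .
  qed
  finally show ?thesis using assms by (simp add: sum_pairs[of "\<lambda>p. (vinner d (x (fst p) (snd p)) D)^2", simplified])
qed

lemma sigmoid_gt_half: "t > 0 \<Longrightarrow> sigmoid t > 1/2"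
proof -
  assume t: "t > 0"
  have "exp (- t) < 1" using t by simp
  then have "1 + exp (- t) < 2" by simp
  then show ?thesis using onepexp_pos[of t] by (simp add: sigmoid_def field_simps)
qed

lemma gamma_pos: "gamma_LB L B > 0"
  by (simp add: gamma_LB_def add_pos_pos)

lemma vnorm_vinner: "vnorm d v = sqrt (vinner d v v)"
  by (simp add: vnorm_def vinner_def power2_eq_square)

lemma det_bound:
  fixes x :: "nat \<Rightarrow> nat \<Rightarrow> nat \<Rightarrow> real" and yt :: "nat \<times> nat \<Rightarrow> bool" and U :: "nat \<Rightarrow> nat \<times> nat \<Rightarrow> real"
    and n m d r :: nat and \<epsilon> L B :: real and \<theta>s \<theta>h :: "nat \<Rightarrow> real"
  defines "I \<equiv> sample_idx n m" and "q \<equiv> sigmoid (\<epsilon> / real m)" and "lam \<equiv> lambda_min d (gram n m x)"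
    and "g' \<equiv> (2 * sigmoid (\<epsilon> / real m) - 1) * gamma_LB L B"
  assumes n: "n \<ge> 1" and m: "m \<ge> 1" and eps: "\<epsilon> > 0"
    and xv: "\<forall>i j. x i j \<in> vecs d \<and> vnorm d (x i j) \<le> 2 * L"
    and ts: "\<theta>s \<in> Theta_B d B" and th: "\<theta>h \<in> Theta_B d B"
    and opt: "rr_loss d n m \<epsilon> x yt \<theta>h \<le> rr_loss d n m \<epsilon> x yt \<theta>s"
    and lam: "lam > 0"
    and on: "orthonormal I r U"
    and span: "\<forall>j<d. \<forall>p\<in>I. x (fst p) (snd p) j = (\<Sum>k<r. ip I (U k) (\<lambda>p. x (fst p) (snd p) j) * U k p)"
  shows "vnorm d (\<lambda>k. \<theta>h k - \<theta>s k) \<le> 2 * sqrt (\<Sum>k<r. (ip I (U k) (\<lambda>p. of_bool (yt p) - ptil q (vinner d (x (fst p) (snd p)) \<theta>s)))^2) / (g' * sqrt (real n * real m * lam))"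
proof -
  define R where "R = 2 * L * B"
  define \<gamma> where "\<gamma> = gamma_LB L B"
  have \<gamma>R: "\<gamma> = 1 / (2 + exp (- R) + exp R)" by (simp add: \<gamma>_def gamma_LB_def R_def)
  have q2: "2 * q - 1 > 0" using sigmoid_gt_half[of "\<epsilon> / real m"] eps m by (simp add: q_def)
  have g'q: "g' = (2 * q - 1) * gamma_LB L B" by (simp add: g'_def q_def)
  have g'pos: "g' > 0" using q2 gamma_pos[of L B] by (simp add: g'q)
  have L0: "0 \<le> 2 * L" using xv vnorm_vinner[of d "x 0 0"] by (metis order.trans real_sqrt_ge_zero vinner_nonneg)
  have B0': "0 \<le> B" using ts by (auto simp: Theta_B_def vnorm_vinner intro: order.trans[OF real_sqrt_ge_zero[OF vinner_nonneg]])
  define D where "D = (\<lambda>k. \<theta>h k - \<theta>s k)"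
  define z0 where "z0 = (\<lambda>p. vinner d (x (fst p) (snd p)) \<theta>s)"
  define z1 where "z1 = (\<lambda>p. vinner d (x (fst p) (snd p)) \<theta>h)"
  define \<delta> where "\<delta> = (\<lambda>p. vinner d (x (fst p) (snd p)) D)"
  define w where "w = (\<lambda>p. of_bool (yt p) - ptil q (z0 p))"
  have \<delta>eq: "\<delta> p = z1 p - z0 p" for p by (simp add: \<delta>_def z0_def z1_def D_def vinner_diff_right)
  have zb: "\<bar>vinner d (x i j) \<theta>\<bar> \<le> R" if "\<theta> \<in> Theta_B d B" for i j \<theta>
  proof -
    have "\<bar>vinner d (x i j) \<theta>\<bar> \<le> vnorm d (x i j) * vnorm d \<theta>" by (rule vinner_bound)
    also have "\<dots> \<le> (2 * L) * B"
    proof (rule mult_mono)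
      show "vnorm d (x i j) \<le> 2 * L" using xv by blast
      show "vnorm d \<theta> \<le> B" using that by (simp add: Theta_B_def)
      show "0 \<le> 2 * L" by (rule L0)
      show "0 \<le> vnorm d \<theta>" by (simp add: vnorm_def sum_nonneg)
    qed
    finally show ?thesis by (simp add: R_def)
  qed
  have gap0: "(\<Sum>p\<in>I. ell q (yt p) (z1 p) - ell q (yt p) (z0 p)) \<le> 0"
  proof -
    have "(\<Sum>p\<in>I. ell q (yt p) (z1 p) - ell q (yt p) (z0 p)) = rr_loss d n m \<epsilon> x yt \<theta>h - rr_loss d n m \<epsilon> x yt \<theta>s"
      unfolding rr_loss_ell q_def[symmetric] I_def
      by (simp add: sum_pairs[symmetric] sum_subtractf z0_def z1_def)
    then show ?thesis using opt by simp
  qed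
  have gapterm: "(ptil q (z0 p) - of_bool (yt p)) * \<delta> p + (2 * q - 1) * (\<gamma> / 2) * (\<delta> p)^2
      \<le> ell q (yt p) (z1 p) - ell q (yt p) (z0 p)" for p
    unfolding \<delta>eq \<gamma>R using ell_gap[of "z0 p" R "z1 p" q "yt p"] zb[OF ts] zb[OF th] q2
    by (simp add: z0_def z1_def)
  have ineq1: "g' / 2 * ip I \<delta> \<delta> \<le> ip I w \<delta>"
  proof -
    have "(\<Sum>p\<in>I. (ptil q (z0 p) - of_bool (yt p)) * \<delta> p + (2 * q - 1) * (\<gamma> / 2) * (\<delta> p)^2) \<le> 0"
      using gap0 sum_mono[of I "\<lambda>p. (ptil q (z0 p) - of_bool (yt p)) * \<delta> p + (2 * q - 1) * (\<gamma> / 2) * (\<delta> p)^2" "\<lambda>p. ell q (yt p) (z1 p) - ell q (yt p) (z0 p)", OF gapterm] by linarith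
    moreover have "(\<Sum>p\<in>I. (ptil q (z0 p) - of_bool (yt p)) * \<delta> p + (2 * q - 1) * (\<gamma> / 2) * (\<delta> p)^2)
        = (\<Sum>p\<in>I. (ptil q (z0 p) - of_bool (yt p)) * \<delta> p) + (2 * q - 1) * (\<gamma> / 2) * (\<Sum>p\<in>I. (\<delta> p)^2)"
      by (simp add: sum.distrib sum_distrib_left)
    moreover have "ip I w \<delta> = - (\<Sum>p\<in>I. (ptil q (z0 p) - of_bool (yt p)) * \<delta> p)"
      by (simp add: ip_def w_def sum_negf[symmetric] algebra_simps)
    moreover have "g' / 2 * ip I \<delta> \<delta> = (2 * q - 1) * (\<gamma> / 2) * (\<Sum>p\<in>I. (\<delta> p)^2)"
      by (simp add: ip_def g'q \<gamma>_def power2_eq_square)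
    ultimately show ?thesis by linarith
  qed
  define a where "a = (\<lambda>j p. x (fst p) (snd p) j)"
  define c where "c = (\<lambda>k. ip I (U k) \<delta>)"
  have \<delta>a: "\<delta> p = (\<Sum>j<d. D j * a j p)" for p by (simp add: \<delta>_def vinner_def a_def mult.commute)
  have cexp: "c k = (\<Sum>j<d. D j * ip I (U k) (a j))" for k
    unfolding c_def by (rule ip_expand) (simp add: \<delta>a)
  have \<delta>span: "\<delta> p = (\<Sum>k<r. c k * U k p)" if p: "p \<in> I" for p
  proof -
    have "\<delta> p = (\<Sum>j<d. D j * (\<Sum>k<r. ip I (U k) (a j) * U k p))"
      unfolding \<delta>a using span p by (intro sum.cong) (auto simp: a_def)
    also have "\<dots> = (\<Sum>k<r. \<Sum>j<d. D j * ip I (U k) (a j) * U k p)"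
      by (simp add: sum_distrib_left mult.assoc) (rule sum.swap)
    also have "\<dots> = (\<Sum>k<r. c k * U k p)" by (simp add: cexp sum_distrib_right)
    finally show ?thesis .
  qed
  define T where "T = (\<Sum>k<r. (ip I (U k) w)^2)"
  have T0: "T \<ge> 0" by (simp add: T_def sum_nonneg)
  have Dd: "ip I \<delta> \<delta> = (\<Sum>k<r. (c k)^2)"
  proof -
    have "ip I \<delta> \<delta> = (\<Sum>p\<in>I. (\<Sum>k<r. c k * U k p)^2)"
      unfolding ip_def using \<delta>span by (intro sum.cong) (auto simp: power2_eq_square)
    also have "\<dots> = (\<Sum>k<r. (c k)^2)" by (rule orth_norm[OF on])
    finally show ?thesis .
  qed
  have cs: "ip I w \<delta> \<le> sqrt (ip I \<delta> \<delta>) * sqrt T"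
  proof -
    have "ip I w \<delta> = (\<Sum>k<r. c k * ip I w (U k))" by (rule ip_expand) (use \<delta>span in auto)
    also have "\<dots> \<le> (\<Sum>k<r. \<bar>c k\<bar> * \<bar>ip I w (U k)\<bar>)"
      by (intro sum_mono) (simp add: abs_mult[symmetric])
    also have "\<dots> \<le> L2_set c {..<r} * L2_set (\<lambda>k. ip I w (U k)) {..<r}" by (rule L2_set_mult_ineq)
    also have "L2_set c {..<r} = sqrt (ip I \<delta> \<delta>)" by (simp add: L2_set_def Dd)
    also have "L2_set (\<lambda>k. ip I w (U k)) {..<r} = sqrt T" by (simp add: L2_set_def T_def ip_comm[of I w])
    finally show ?thesis .
  qed
  have sD: "sqrt (ip I \<delta> \<delta>) \<le> 2 * sqrt T / g'"
  proof (cases "ip I \<delta> \<delta> = 0")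
    case True then show ?thesis using T0 g'pos by simp
  next
    case False
    have Dp: "ip I \<delta> \<delta> > 0" using False ip_nonneg[of I \<delta>] by simp
    have "g' / 2 * (sqrt (ip I \<delta> \<delta>) * sqrt (ip I \<delta> \<delta>)) \<le> sqrt (ip I \<delta> \<delta>) * sqrt T"
      using ineq1 cs Dp by simp
    then have "(g' / 2 * sqrt (ip I \<delta> \<delta>)) * sqrt (ip I \<delta> \<delta>) \<le> sqrt T * sqrt (ip I \<delta> \<delta>)"
      by (simp add: ac_simps)
    moreover have "0 < sqrt (ip I \<delta> \<delta>)" using Dp by simp
    ultimately have "g' / 2 * sqrt (ip I \<delta> \<delta>) \<le> sqrt T"
      by (rule mult_right_le_imp_le)
    then show ?thesis using g'pos by (simp add: field_simps)
  qed
  have Dv: "D \<in> vecs d" using ts th by (auto simp: Theta_B_def vecs_def D_def)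
  have sym: "\<And>k l. k < d \<Longrightarrow> l < d \<Longrightarrow> gram n m x k l = gram n m x l k"
    by (simp add: gram_def mult.commute)
  have NN: "real n * real m > 0" using n m by simp
  have "real n * real m * lam * vinner d D D \<le> real n * real m * qf d (gram n m x) D"
  proof -
    have "lam * vinner d D D \<le> qf d (gram n m x) D"
      unfolding lam_def by (rule lambda_min_le[where M="gram n m x", OF sym Dv])
    then have "(real n * real m) * (lam * vinner d D D) \<le> (real n * real m) * qf d (gram n m x) D"
      using NN by (intro mult_left_mono) auto
    then show ?thesis by (simp add: mult.assoc)
  qed
  also have "\<dots> = ip I \<delta> \<delta>"
    by (simp add: qf_gram[OF n m] ip_def I_def \<delta>_def power2_eq_square)
  finally have le1: "real n * real m * lam * vinner d D D \<le> ip I \<delta> \<delta>" .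
  have "vnorm d D = sqrt (real n * real m * lam * vinner d D D) / sqrt (real n * real m * lam)"
  proof -
    have pos: "sqrt (real n * real m * lam) > 0" using NN lam by simp
    have "sqrt (real n * real m * lam * vinner d D D) = sqrt (real n * real m * lam) * sqrt (vinner d D D)"
      by (rule real_sqrt_mult)
    then have "sqrt (real n * real m * lam * vinner d D D) / sqrt (real n * real m * lam) = sqrt (vinner d D D)"
      using pos by (simp only: nonzero_mult_div_cancel_left[of "sqrt (real n * real m * lam)"])
    then show ?thesis by (simp only: vnorm_vinner)
  qed
  also have "\<dots> \<le> sqrt (ip I \<delta> \<delta>) / sqrt (real n * real m * lam)"
    using le1 NN lam by (intro divide_right_mono) auto
  also have "\<dots> \<le> (2 * sqrt T / g') / sqrt (real n * real m * lam)"
    using sD NN lam by (intro divide_right_mono) auto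
  finally show ?thesis by (simp add: D_def T_def w_def z0_def)
qed

lemma two_q_minus_1: "2 * sigmoid t - 1 = (exp t - 1) / (exp t + 1)"
proof -
  have e: "exp (- t) = 1 / exp t" by (simp add: exp_minus inverse_eq_divide)
  have p: "exp t > 0" by simp
  have "sigmoid t = exp t / (exp t + 1)"
    unfolding sigmoid_def e using p by (simp add: field_simps)
  moreover have "2 * (exp t / (exp t + 1)) - 1 = (exp t - 1) / (exp t + 1)"
  proof -
    have "exp t + 1 > 0" using p by linarith
    then show ?thesis by (simp add: field_simps)
  qed
  ultimately show ?thesis by simp
qed

lemma final_arith:
  fixes K dd l gam lam NN e C c :: real
  assumes K: "K \<le> c * (dd + l)" and c: "c > 0" and dl: "dd + l \<ge> 0" and K0: "K \<ge> 0"
    and gam: "gam > 0" and lam: "lam > 0" and NN: "NN > 0" and e: "e > 1" and C: "C = 2 * sqrt c"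
  shows "2 * sqrt K / (((e - 1) / (e + 1)) * gam * sqrt (NN * lam))
     \<le> C * (1 / (gam * sqrt lam)) * ((e + 1) / (e - 1)) * sqrt ((dd + l) / NN)"
proof -
  define A where "A = 2 * (e + 1) / ((e - 1) * gam * sqrt NN * sqrt lam)"
  have A0: "A > 0" using e gam NN lam by (simp add: A_def)
  have L: "2 * sqrt K / (((e - 1) / (e + 1)) * gam * sqrt (NN * lam)) = A * sqrt K"
    using e gam NN lam by (simp add: A_def real_sqrt_mult field_simps)
  have R: "C * (1 / (gam * sqrt lam)) * ((e + 1) / (e - 1)) * sqrt ((dd + l) / NN) = A * (sqrt c * sqrt (dd + l))"
    using e gam NN lam by (simp add: A_def C real_sqrt_divide field_simps)
  have "sqrt K \<le> sqrt (c * (dd + l))" using K by simp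
  also have "\<dots> = sqrt c * sqrt (dd + l)" by (rule real_sqrt_mult)
  finally have "A * sqrt K \<le> A * (sqrt c * sqrt (dd + l))" using A0 by (intro mult_left_mono) auto
  then show ?thesis using L R by simp
qed


lemma thm_core:
  fixes d n m :: nat and \<epsilon> \<alpha> L B :: real
    and \<phi> :: "'s \<Rightarrow> 'a \<Rightarrow> (nat \<Rightarrow> real)" and s :: "nat \<Rightarrow> nat \<Rightarrow> 's" and a0 a1 :: "nat \<Rightarrow> nat \<Rightarrow> 'a"
    and \<theta>star :: "nat \<Rightarrow> real" and \<theta>hat :: "((nat \<times> nat) \<Rightarrow> bool) \<Rightarrow> (nat \<Rightarrow> real)"
  assumes n: "n \<ge> 1" and m: "m \<ge> 1" and eps: "\<epsilon> > 0" and a0': "0 < \<alpha>" and a1': "\<alpha> < 1"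
    and phi: "\<forall>st act. \<phi> st act \<in> vecs d \<and> vnorm d (\<phi> st act) \<le> L"
    and ts: "\<theta>star \<in> Theta_B d B"
    and opt: "\<forall>yt. \<theta>hat yt \<in> Theta_B d B \<and>
       (\<forall>\<theta>\<in>Theta_B d B. rr_loss d n m \<epsilon> (feat \<phi> s a0 a1) yt (\<theta>hat yt)
                          \<le> rr_loss d n m \<epsilon> (feat \<phi> s a0 a1) yt \<theta>)"
    and lam: "lambda_min d (gram n m (feat \<phi> s a0 a1)) > 0"
  shows "user_label_dp \<epsilon> n m (\<lambda>y. map_pmf \<theta>hat (rr_pmf \<epsilon> n m y)) \<and>
    measure_pmf.prob
      (bind_pmf (btl_labels d n m (feat \<phi> s a0 a1) \<theta>star) (\<lambda>y. rr_pmf \<epsilon> n m y))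
      {yt. vnorm d (\<lambda>k. \<theta>hat yt k - \<theta>star k)
             \<le> (2 * sqrt (2 * (c1 + 1))) * (1 / (gamma_LB L B * sqrt (lambda_min d (gram n m (feat \<phi> s a0 a1)))))
                 * ((exp (\<epsilon> / real m) + 1) / (exp (\<epsilon> / real m) - 1))
                 * sqrt ((real d + ln (1 / \<alpha>)) / (real n * real m))}
      \<ge> 1 - \<alpha>"
proof
  show "user_label_dp \<epsilon> n m (\<lambda>y. map_pmf \<theta>hat (rr_pmf \<epsilon> n m y))"
    by (rule rr_dp) (use m eps in auto)
next
  define x where "x = feat \<phi> s a0 a1"
  define I where "I = sample_idx n m"
  define q where "q = sigmoid (\<epsilon> / real m)"
  define lm where "lm = lambda_min d (gram n m x)"
  define z0 where "z0 = (\<lambda>p. vinner d (x (fst p) (snd p)) \<theta>star)"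
  have finI: "finite I" by (simp add: I_def sample_idx_def)
  have q01: "0 < q" "q < 1" by (simp_all add: q_def sigmoid_pos sigmoid_lt1)
  have xv: "\<forall>i j. x i j \<in> vecs d \<and> vnorm d (x i j) \<le> 2 * L"
  proof (intro allI conjI)
    fix i j
    show "x i j \<in> vecs d" using phi by (auto simp: x_def feat_def vecs_def)
    have "vnorm d (x i j) \<le> vnorm d (\<phi> (s i j) (a1 i j)) + vnorm d (\<phi> (s i j) (a0 i j))"
      unfolding x_def feat_def by (rule vnorm_diff)
    also have "\<dots> \<le> L + L" using phi by (intro add_mono) auto
    finally show "vnorm d (x i j) \<le> 2 * L" by simp
  qed
  obtain U r where r: "r \<le> d" and on: "orthonormal I r U"
    and span: "\<forall>j<d. \<forall>p\<in>I. x (fst p) (snd p) j = (\<Sum>k<r. ip I (U k) (\<lambda>p. x (fst p) (snd p) j) * U k p)"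
    using gram_schmidt[OF finI, of d "\<lambda>j p. x (fst p) (snd p) j"] by blast
  define pt where "pt = (\<lambda>p. ptil q (z0 p))"
  have pt01: "0 \<le> pt p \<and> pt p \<le> 1" for p
  proof -
    have sg: "0 < sigmoid (z0 p)" "sigmoid (z0 p) < 1" by (simp_all add: sigmoid_pos sigmoid_lt1)
    have eq: "pt p = q * sigmoid (z0 p) + (1 - q) * (1 - sigmoid (z0 p))"
      by (simp add: pt_def ptil_def algebra_simps)
    have "0 \<le> q * sigmoid (z0 p) + (1 - q) * (1 - sigmoid (z0 p))"
      using sg q01 by (intro add_nonneg_nonneg mult_nonneg_nonneg) auto
    moreover have "q * sigmoid (z0 p) + (1 - q) * (1 - sigmoid (z0 p)) \<le> q * 1 + (1 - q) * 1"
      using sg q01 by (intro add_mono mult_left_mono) auto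
    ultimately show ?thesis using eq by simp
  qed
  have dist: "bind_pmf (btl_labels d n m x \<theta>star) (\<lambda>y. rr_pmf \<epsilon> n m y) = Pi_pmf I False (\<lambda>p. bernoulli_pmf (pt p))"
  proof -
    define sf where "sf = (\<lambda>p. sigmoid (z0 p))"
    have b: "btl_labels d n m x \<theta>star = Pi_pmf I False (\<lambda>ij. bernoulli_pmf (sf ij))"
      unfolding btl_labels_def I_def by (rule arg_cong[where f="Pi_pmf _ _"]) (auto simp: fun_eq_iff sf_def z0_def)
    have rr: "rr_pmf \<epsilon> n m y = Pi_pmf I False (\<lambda>ij. map_pmf (\<lambda>keep. if keep then y ij else \<not> y ij) (bernoulli_pmf q))" for y
      by (simp add: rr_pmf_def I_def q_def)
    have "bind_pmf (btl_labels d n m x \<theta>star) (\<lambda>y. rr_pmf \<epsilon> n m y) =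
        Pi_pmf I False (\<lambda>ij. bernoulli_pmf (q * sf ij + (1 - q) * (1 - sf ij)))"
      unfolding b rr by (rule rr_joint[OF finI]) (use q01 in \<open>auto simp: sf_def sigmoid_pos sigmoid_lt1 less_imp_le\<close>)
    also have "(\<lambda>ij. bernoulli_pmf (q * sf ij + (1 - q) * (1 - sf ij))) = (\<lambda>p. bernoulli_pmf (pt p))"
      by (auto simp: fun_eq_iff pt_def ptil_def sf_def algebra_simps)
    finally show ?thesis .
  qed
  define T where "T = (\<lambda>Y. \<Sum>k<r. (ip I (U k) (\<lambda>i. of_bool (Y i) - pt i))^2)"
  define K where "K = 2 * (c1 * real r + ln (1 / \<alpha>))"
  have tail: "measure_pmf.prob (Pi_pmf I False (\<lambda>p. bernoulli_pmf (pt p))) {Y. T Y \<le> K} \<ge> 1 - \<alpha>"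
    unfolding T_def K_def by (rule conc_tail[OF finI pt01 on a0'])
  define Tgt where "Tgt = {yt. vnorm d (\<lambda>k. \<theta>hat yt k - \<theta>star k)
             \<le> (2 * sqrt (2 * (c1 + 1))) * (1 / (gamma_LB L B * sqrt lm))
                 * ((exp (\<epsilon> / real m) + 1) / (exp (\<epsilon> / real m) - 1))
                 * sqrt ((real d + ln (1 / \<alpha>)) / (real n * real m))}"
  have sub: "{Y. T Y \<le> K} \<subseteq> Tgt"
  proof
    fix Y assume "Y \<in> {Y. T Y \<le> K}"
    then have TK: "T Y \<le> K" by simp
    have th: "\<theta>hat Y \<in> Theta_B d B" and opt': "rr_loss d n m \<epsilon> x Y (\<theta>hat Y) \<le> rr_loss d n m \<epsilon> x Y \<theta>star"
      using opt ts by (auto simp: x_def)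
    have lm0: "lm > 0" using lam by (simp add: lm_def x_def)
    define g' where "g' = (2 * sigmoid (\<epsilon> / real m) - 1) * gamma_LB L B"
    have db: "vnorm d (\<lambda>k. \<theta>hat Y k - \<theta>star k) \<le> 2 * sqrt (T Y) / (g' * sqrt (real n * real m * lm))"
      using det_bound[OF n m eps xv ts th opt' lm0[unfolded lm_def] on[unfolded I_def] span[unfolded I_def]]
      by (simp add: T_def pt_def z0_def q_def I_def g'_def lm_def)
    have g'e: "g' = ((exp (\<epsilon> / real m) - 1) / (exp (\<epsilon> / real m) + 1)) * gamma_LB L B"
      by (simp add: g'_def two_q_minus_1)
    have e1: "exp (\<epsilon> / real m) > 1" using eps m by simp
    have g'pos: "g' > 0"
    proof -
      have "(exp (\<epsilon> / real m) - 1) / (exp (\<epsilon> / real m) + 1) > 0" using e1 by (intro divide_pos_pos; linarith)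
      then show ?thesis using gamma_pos[of L B] unfolding g'e by (rule mult_pos_pos)
    qed
    have NN: "real n * real m > 0" using n m by simp
    have T0: "T Y \<ge> 0" by (simp add: T_def sum_nonneg)
    have l0: "ln (1 / \<alpha>) \<ge> 0" using a0' a1' by simp
    have Kb: "K \<le> (2 * (c1 + 1)) * (real d + ln (1 / \<alpha>))"
    proof -
      have "c1 * real r \<le> (c1 + 1) * real d"
        using r c1_pos by (intro mult_mono) auto
      moreover have "ln (1 / \<alpha>) \<le> (c1 + 1) * ln (1 / \<alpha>)" using l0 c1_pos by (simp add: mult_le_cancel_right1)
      ultimately show ?thesis by (simp add: K_def algebra_simps)
    qed
    have "2 * sqrt (T Y) / (g' * sqrt (real n * real m * lm)) \<le> 2 * sqrt K / (g' * sqrt (real n * real m * lm))"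
      using TK g'pos NN lm0 by (intro divide_right_mono mult_left_mono) auto
    also have "\<dots> = 2 * sqrt K / (((exp (\<epsilon> / real m) - 1) / (exp (\<epsilon> / real m) + 1)) * gamma_LB L B * sqrt ((real n * real m) * lm))"
      by (simp add: g'e)
    also have "\<dots> \<le> (2 * sqrt (2 * (c1 + 1))) * (1 / (gamma_LB L B * sqrt lm))
                 * ((exp (\<epsilon> / real m) + 1) / (exp (\<epsilon> / real m) - 1))
                 * sqrt ((real d + ln (1 / \<alpha>)) / (real n * real m))"
      by (rule final_arith[OF Kb]) (use c1_pos l0 T0 TK gamma_pos lm0 NN e1 in auto)
    finally show "Y \<in> Tgt" using db by (simp add: Tgt_def)
  qed
  have "1 - \<alpha> \<le> measure_pmf.prob (Pi_pmf I False (\<lambda>p. bernoulli_pmf (pt p))) {Y. T Y \<le> K}" by (rule tail)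
  also have "\<dots> \<le> measure_pmf.prob (Pi_pmf I False (\<lambda>p. bernoulli_pmf (pt p))) Tgt"
    using sub by (intro measure_pmf.finite_measure_mono) auto
  finally show "measure_pmf.prob
      (bind_pmf (btl_labels d n m (feat \<phi> s a0 a1) \<theta>star) (\<lambda>y. rr_pmf \<epsilon> n m y))
      {yt. vnorm d (\<lambda>k. \<theta>hat yt k - \<theta>star k)
             \<le> (2 * sqrt (2 * (c1 + 1))) * (1 / (gamma_LB L B * sqrt (lambda_min d (gram n m (feat \<phi> s a0 a1)))))
                 * ((exp (\<epsilon> / real m) + 1) / (exp (\<epsilon> / real m) - 1))
                 * sqrt ((real d + ln (1 / \<alpha>)) / (real n * real m))}
      \<ge> 1 - \<alpha>"
    using dist by (simp add: Tgt_def x_def lm_def)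
qed


theorem theorem1:
  shows "\<exists>C>0. \<forall>(d::nat) (n::nat) (m::nat) (\<epsilon>::real) (\<alpha>::real) (L::real) (B::real)
      (\<phi>::'s \<Rightarrow> 'a \<Rightarrow> (nat \<Rightarrow> real)) (s::nat \<Rightarrow> nat \<Rightarrow> 's) (a0::nat \<Rightarrow> nat \<Rightarrow> 'a)
      (a1::nat \<Rightarrow> nat \<Rightarrow> 'a) (\<theta>star::nat \<Rightarrow> real)
      (\<theta>hat::((nat \<times> nat) \<Rightarrow> bool) \<Rightarrow> (nat \<Rightarrow> real)).
    d \<ge> 1 \<and> n \<ge> 1 \<and> m \<ge> 1 \<and> \<epsilon> > 0 \<and> 0 < \<alpha> \<and> \<alpha> < 1 \<and>
    (\<forall>st act. \<phi> st act \<in> vecs d \<and> vnorm d (\<phi> st act) \<le> L) \<and>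
    \<theta>star \<in> Theta_B d B \<and>
    (\<forall>yt. \<theta>hat yt \<in> Theta_B d B \<and>
       (\<forall>\<theta>\<in>Theta_B d B. rr_loss d n m \<epsilon> (feat \<phi> s a0 a1) yt (\<theta>hat yt)
                          \<le> rr_loss d n m \<epsilon> (feat \<phi> s a0 a1) yt \<theta>)) \<and>
    lambda_min d (gram n m (feat \<phi> s a0 a1)) > 0
    \<longrightarrow>
    user_label_dp \<epsilon> n m (\<lambda>y. map_pmf \<theta>hat (rr_pmf \<epsilon> n m y)) \<and>
    measure_pmf.prob
      (bind_pmf (btl_labels d n m (feat \<phi> s a0 a1) \<theta>star) (\<lambda>y. rr_pmf \<epsilon> n m y))
      {yt. vnorm d (\<lambda>k. \<theta>hat yt k - \<theta>star k)
             \<le> C * (1 / (gamma_LB L B * sqrt (lambda_min d (gram n m (feat \<phi> s a0 a1)))))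
                 * ((exp (\<epsilon> / real m) + 1) / (exp (\<epsilon> / real m) - 1))
                 * sqrt ((real d + ln (1 / \<alpha>)) / (real n * real m))}
      \<ge> 1 - \<alpha>"
proof -
  show ?thesis
    apply (rule exI[of _ "2 * sqrt (2 * (c1 + 1))"], rule conjI)
    subgoal using c1_pos by simp
    apply (intro allI impI)
    apply (elim conjE)
    apply (rule thm_core; assumption)
    done
qed

end
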